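(* Let $\omega^{(1)}=(2,2,1)$, $\omega^{(2)}=(2,4)$, $\omega^{(3)}=(4,1,1)$, $\omega^{(4)}=(4,3)$, $\omega^{(5)}=(6,2)$. Then for $j=1,2,3,4,5$ respectively: $\dim(QP^{\otimes7}_{10})^{>0}(\omega^{(j)})=0,0,0,20,35$; $\dim(QP^{\otimes8}_{10})^{>0}(\omega^{(j)})=0,0,0,0,20$; and $\dim(QP^{\otimes h}_{10})^{>0}(\omega^{(j)})=0$ for all $j$ whenever $h\ge9$.
   Context: $P^{\otimes h}=\mathbb F_2[t_1,\dots,t_h]$ ($\deg t_i=1$) with the standard action of the mod 2 Steenrod algebra $\mathcal A$ ($\overline{\mathcal A}$ its positive-degree part). The weight vector of $t=t_1^{a_1}\cdots t_h^{a_h}$ is $\omega(t)$ with $\omega_i(t)=\sum_j\alpha_{i-1}(a_j)$, $\alpha_k(a)$ the $k$-th binary digit; weight vectors are ordered left-lexicographically. $(P^{\otimes h})^{>0}$ is the $\mathcal A$-submodule spanned by monomials with all exponents positive. For a weight vector $\omega$ of degree $n$, $(P^{\otimes h}_n)^{>0}(\omega)$ (resp. $(<\omega)$) is spanned by degree-$n$ monomials of $(P^{\otimes h})^{>0}$ with $\omega(t)\le\omega$ (resp. $<\omega$), and $(QP^{\otimes h}_n)^{>0}(\omega)$ is the quotient of $(P^{\otimes h}_n)^{>0}(\omega)$ by $(\overline{\mathcal A}(P^{\otimes h})^{>0}\cap(P^{\otimes h}_n)^{>0}(\omega))+(P^{\otimes h}_n)^{>0}(<\omega)$. *)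

theory Defs
  imports Main
begin

text \<open>Polynomials of P^{\<otimes>h} = F_2[t_1,...,t_h]: a monomial t_1^{a_1}...t_h^{a_h}
  is its exponent list [a_1,...,a_h]; a polynomial over F_2 is the (finite) set of
  monomials occurring with coefficient 1.  Addition is symmetric difference.\<close>

type_synonym mono = "nat list"
type_synonym poly = "mono set"

definition xorsum :: "('b \<Rightarrow> poly) \<Rightarrow> 'b set \<Rightarrow> poly" where
  "xorsum f S = {x. odd (card {m \<in> S. x \<in> f m})}"

definition F2span :: "poly set \<Rightarrow> poly set" where
  "F2span G = {xorsum id F | F. finite F \<and> F \<subseteq> G}"

text \<open>Sq^k on a monomial (Cartan formula, Sq^k(t^a) = binom(a,k) t^(a+k)).\<close>
definition sq_mono :: "nat \<Rightarrow> mono \<Rightarrow> poly" where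
  "sq_mono k a = {b. length b = length a \<and> (\<forall>j<length a. a ! j \<le> b ! j)
      \<and> sum_list b = sum_list a + k
      \<and> (\<forall>j<length a. odd ((a ! j) choose (b ! j - a ! j)))}"

definition Sq :: "nat \<Rightarrow> poly \<Rightarrow> poly" where
  "Sq k p = xorsum (sq_mono k) p"

fun Sqs :: "nat list \<Rightarrow> poly \<Rightarrow> poly" where
  "Sqs [] p = p"
| "Sqs (i # is) p = Sq i (Sqs is p)"

definition posmono :: "nat \<Rightarrow> mono set" where
  "posmono h = {a. length a = h \<and> (\<forall>x\<in>set a. 0 < x)}"

definition Ppos :: "nat \<Rightarrow> poly set" where
  "Ppos h = F2span {{a} | a. a \<in> posmono h}"

text \<open>\<overline>A (P^{\<otimes>h})^{>0}: \<overline>A is spanned by the products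
  Sq^{i_1}...Sq^{i_k} with k \<ge> 1 and all i_j > 0 (A is generated by the Sq^i).\<close>
definition hitPpos :: "nat \<Rightarrow> poly set" where
  "hitPpos h = F2span {Sqs is x | is x. is \<noteq> [] \<and> (\<forall>i\<in>set is. 0 < i) \<and> x \<in> Ppos h}"

text \<open>Weight vector: component i (0-based, i.e. \<omega>_{i+1}) is \<Sum>_j \<alpha>_i(a_j).\<close>
definition weight :: "mono \<Rightarrow> nat \<Rightarrow> nat" where
  "weight a i = (\<Sum>x\<leftarrow>a. (x div 2 ^ i) mod 2)"

definition wvec :: "nat list \<Rightarrow> nat \<Rightarrow> nat" where
  "wvec w i = (if i < length w then w ! i else 0)"

definition wless :: "(nat \<Rightarrow> nat) \<Rightarrow> (nat \<Rightarrow> nat) \<Rightarrow> bool" where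
  "wless u v = (\<exists>k. (\<forall>i<k. u i = v i) \<and> u k < v k)"

definition wle :: "(nat \<Rightarrow> nat) \<Rightarrow> (nat \<Rightarrow> nat) \<Rightarrow> bool" where
  "wle u v = (u = v \<or> wless u v)"

definition Pw :: "nat \<Rightarrow> nat \<Rightarrow> nat list \<Rightarrow> poly set" where
  "Pw h n w = F2span {{a} | a. a \<in> posmono h \<and> sum_list a = n \<and> wle (weight a) (wvec w)}"

definition Pwlt :: "nat \<Rightarrow> nat \<Rightarrow> nat list \<Rightarrow> poly set" where
  "Pwlt h n w = F2span {{a} | a. a \<in> posmono h \<and> sum_list a = n \<and> wless (weight a) (wvec w)}"

definition Rel :: "nat \<Rightarrow> nat \<Rightarrow> nat list \<Rightarrow> poly set" where
  "Rel h n w = {(x - y) \<union> (y - x) | x y. x \<in> hitPpos h \<inter> Pw h n w \<and> y \<in> Pwlt h n w}"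

text \<open>dim (QP^{\<otimes>h}_n)^{>0}(\<omega>) = dimension of Pw / Rel, i.e. the least number of
  elements of Pw which together with Rel span Pw.\<close>
definition QPdim :: "nat \<Rightarrow> nat \<Rightarrow> nat list \<Rightarrow> nat" where
  "QPdim h n w = (LEAST d. \<exists>B. finite B \<and> card B = d \<and> B \<subseteq> Pw h n w
                              \<and> F2span (B \<union> Rel h n w) = Pw h n w)"

end

theory Submission
  imports Defs "HOL-Library.List_Lexorder"
begin
definition sd :: "poly \<Rightarrow> poly \<Rightarrow> poly" where "sd p q = (p - q) \<union> (q - p)"

fun sqlist :: "nat \<Rightarrow> mono \<Rightarrow> mono list" where
  "sqlist k [] = (if k = 0 then [[]] else [])"
| "sqlist k (x # xs) = concat (map (\<lambda>j. if odd (x choose j) then map (Cons (x + j)) (sqlist (k - j) xs) else []) [0..<Suc k])"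

fun comps :: "nat \<Rightarrow> nat \<Rightarrow> mono list" where
  "comps 0 s = [[]]"
| "comps (Suc n) s = concat (map (\<lambda>x. map (Cons x) (comps n (s - x))) [1..<Suc s])"

definition xorL :: "mono list list \<Rightarrow> mono list" where
  "xorL Ls = filter (\<lambda>x. odd (length (filter (\<lambda>L. x \<in> set L) Ls))) (remdups (concat Ls))"

definition wleB :: "(nat \<Rightarrow> nat) \<Rightarrow> (nat \<Rightarrow> nat) \<Rightarrow> bool" where
  "wleB u v = (list_all (\<lambda>i. u i = v i) [0..<4] \<or> list_ex (\<lambda>k. list_all (\<lambda>i. u i = v i) [0..<k] \<and> u k < v k) [0..<4])"

definition wlessB :: "(nat \<Rightarrow> nat) \<Rightarrow> (nat \<Rightarrow> nat) \<Rightarrow> bool" where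
  "wlessB u v = list_ex (\<lambda>k. list_all (\<lambda>i. u i = v i) [0..<k] \<and> u k < v k) [0..<4]"

definition Gl :: "nat \<Rightarrow> nat list \<Rightarrow> mono list" where
  "Gl h w = filter (\<lambda>a. sum_list a = 10 \<and> wleB (weight a) (wvec w)) (comps h 10)"

definition Gltl :: "nat \<Rightarrow> nat list \<Rightarrow> mono list" where
  "Gltl h w = filter (\<lambda>a. sum_list a = 10 \<and> wlessB (weight a) (wvec w)) (comps h 10)"

fun msd :: "'a::linorder list \<Rightarrow> 'a list \<Rightarrow> 'a list" where
  "msd [] ys = ys"
| "msd xs [] = xs"
| "msd (x # xs) (y # ys) = (if x = y then msd xs ys else if x < y then x # msd xs (y # ys) else y # msd (x # xs) ys)"

fun icount :: "'a::linorder list \<Rightarrow> 'a list \<Rightarrow> nat" where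
  "icount [] ys = 0"
| "icount xs [] = 0"
| "icount (x # xs) (y # ys) = (if x = y then Suc (icount xs ys) else if x < y then icount xs (y # ys) else icount (x # xs) ys)"

fun sortedL :: "'a::linorder list \<Rightarrow> bool" where
  "sortedL (x # y # zs) = (x < y \<and> sortedL (y # zs))"
| "sortedL _ = True"

definition xorM :: "'a::linorder list list \<Rightarrow> 'a list" where
  "xorM Ls = foldr msd Ls []"

definition chkS :: "(mono \<times> mono list) list \<Rightarrow> mono list \<Rightarrow> bool" where
  "chkS tab S = (sortedL S \<and> list_all (\<lambda>(e, c). even (icount c S)) tab)"

definition chkR2 :: "mono list \<Rightarrow> mono \<Rightarrow> mono list \<Rightarrow> mono list \<Rightarrow> bool \<Rightarrow> mono list \<Rightarrow> bool" where
  "chkR2 G a ys bs ok X = (ok \<and> sortedL ys \<and> sortedL bs \<and> list_all (\<lambda>x. x \<in> set G) X \<and> xorM [X, ys, bs] = [a])"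

definition chkR :: "mono list \<Rightarrow> mono \<Rightarrow> mono list \<Rightarrow> mono list \<Rightarrow> mono list list \<Rightarrow> bool" where
  "chkR G a ys bs Ss = chkR2 G a ys bs (list_all sortedL Ss) (xorM Ss)"

definition chk :: "nat \<Rightarrow> nat list \<Rightarrow> mono list \<Rightarrow> mono list \<Rightarrow> (mono \<times> mono list) list
    \<Rightarrow> (mono \<times> (nat \<times> mono) list \<times> mono list \<times> mono list) list \<Rightarrow> bool" where
  "chk h w G Glt tab rels \<longleftrightarrow>
   Gl h w = G \<and> Gltl h w = Glt \<and> distinct (map fst tab) \<and>
   list_all (\<lambda>(e, c). e \<in> set G \<and> sortedL c
      \<and> list_all (\<lambda>x. length x = h \<and> sum_list x = 10 \<and> x \<notin> set Glt) c
      \<and> list_all (\<lambda>e'. (e' \<in> set c) = (e' = e)) (map fst tab)) tab \<and>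
   list_all (\<lambda>a. chkS tab (sqlist (10 - sum_list a) a)) (comps h 9) \<and>
   list_all (\<lambda>a. a \<in> set (map fst tab) \<or> a \<in> set Glt \<or> a \<in> set (map fst rels)) G \<and>
   list_all (\<lambda>(a, ps, ys, bs). list_all (\<lambda>(k,m). 0 < k \<and> length m = h \<and> list_all (\<lambda>x. 0 < x) m) ps
        \<and> chkR G a ys bs (map (\<lambda>(k,m). sqlist k m) ps)
        \<and> list_all (\<lambda>y. y \<in> set Glt) ys \<and> list_all (\<lambda>b. b \<in> set (map fst tab)) bs) rels"
lemma sd_assoc: "sd p (sd q r) = sd (sd p q) r" by (auto simp: sd_def)
lemma sd_comm: "sd p q = sd q p" by (auto simp: sd_def)
lemma sd_self: "sd (sd p q) q = p" by (auto simp: sd_def)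
lemma sd_empty[simp]: "sd p {} = p" "sd {} p = p" by (auto simp: sd_def)

lemma xorsum_empty[simp]: "xorsum f {} = {}" by (simp add: xorsum_def)

lemma xorsum_insert:
  assumes "finite S" "m \<notin> S"
  shows "xorsum f (insert m S) = sd (xorsum f S) (f m)"
proof -
  have "x \<in> xorsum f (insert m S) \<longleftrightarrow> x \<in> sd (xorsum f S) (f m)" for x
  proof (cases "x \<in> f m")
    case True
    then have "{m' \<in> insert m S. x \<in> f m'} = insert m {m' \<in> S. x \<in> f m'}" by auto
    moreover have "card (insert m {m' \<in> S. x \<in> f m'}) = Suc (card {m' \<in> S. x \<in> f m'})"
      using assms by simp
    ultimately show ?thesis using True by (simp add: xorsum_def sd_def)
  next
    case False
    then have "{m' \<in> insert m S. x \<in> f m'} = {m' \<in> S. x \<in> f m'}" by auto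
    then show ?thesis using False by (simp add: xorsum_def sd_def)
  qed
  then show ?thesis by blast
qed

definition closed :: "poly set \<Rightarrow> bool" where
  "closed S \<longleftrightarrow> {} \<in> S \<and> (\<forall>p\<in>S. \<forall>q\<in>S. sd p q \<in> S)"

lemma span_least:
  assumes "closed S" "G \<subseteq> S"
  shows "F2span G \<subseteq> S"
proof
  fix p assume "p \<in> F2span G"
  then obtain F where F: "finite F" "F \<subseteq> G" "p = xorsum id F" by (auto simp: F2span_def)
  have "xorsum id F \<in> S" using F(1,2)
  proof (induction F rule: finite_induct)
    case empty then show ?case using assms by (simp add: closed_def)
  next
    case (insert m F)
    then show ?case using assms by (auto simp: xorsum_insert closed_def)
  qed
  then show "p \<in> S" using F by simp
qed

lemma span_empty: "{} \<in> F2span G"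
  unfolding F2span_def by (rule CollectI, rule exI[of _ "{}"]) simp

lemma span_sd_gen:
  assumes "p \<in> F2span G" "q \<in> G"
  shows "sd p q \<in> F2span G"
proof -
  obtain F where F: "finite F" "F \<subseteq> G" "p = xorsum id F" using assms by (auto simp: F2span_def)
  show ?thesis
  proof (cases "q \<in> F")
    case True
    have "xorsum id F = sd (xorsum id (F - {q})) q"
      using xorsum_insert[of "F - {q}" q id] F True by (simp add: insert_absorb)
    then have "sd p q = xorsum id (F - {q})" using F by (simp add: sd_self)
    then show ?thesis using F unfolding F2span_def by blast
  next
    case False
    have "sd p q = xorsum id (insert q F)" using F False by (simp add: xorsum_insert)
    then show ?thesis using F assms(2) unfolding F2span_def by blast
  qed
qed

lemma span_gen: "q \<in> G \<Longrightarrow> q \<in> F2span G"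
  using span_sd_gen[OF span_empty] by fastforce

lemma span_closed: "closed (F2span G)"
proof -
  have "sd p (xorsum id F) \<in> F2span G" if "p \<in> F2span G" "finite F" "F \<subseteq> G" for p F
    using that(2,3)
  proof (induction F rule: finite_induct)
    case empty then show ?case using that(1) by simp
  next
    case (insert m F)
    then have "sd p (xorsum id (insert m F)) = sd (sd p (xorsum id F)) m"
      by (simp add: xorsum_insert sd_assoc)
    moreover have "sd (sd p (xorsum id F)) m \<in> F2span G"
      by (rule span_sd_gen) (use insert in \<open>auto simp: id_def\<close>)
    ultimately show ?case by (simp add: id_def)
  qed
  then show ?thesis unfolding closed_def using span_empty
    by (auto simp: F2span_def)
qed

lemma span_sd: "p \<in> F2span G \<Longrightarrow> q \<in> F2span G \<Longrightarrow> sd p q \<in> F2span G"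
  using span_closed unfolding closed_def by blast

lemma span_mono: "G \<subseteq> H \<Longrightarrow> F2span G \<subseteq> F2span H"
  by (rule span_least[OF span_closed]) (auto intro: span_gen)

lemma fin_span:
  assumes "finite X" "\<forall>x\<in>X. P x"
  shows "X \<in> F2span {{a} | a. P a}"
  using assms
proof (induction X rule: finite_induct)
  case empty show ?case by (rule span_empty)
next
  case (insert x X)
  then have "insert x X = sd X {x}" by (auto simp: sd_def)
  then show ?case using insert span_sd_gen[of X _ "{x}"] by auto
qed

lemma span_sub:
  assumes "p \<in> F2span {{a} | a. P a}"
  shows "finite p \<and> (\<forall>x\<in>p. P x)"
proof -
  have "closed {p. finite p \<and> (\<forall>x\<in>p. P x)}" unfolding closed_def sd_def by auto
  then have "F2span {{a} | a. P a} \<subseteq> {p. finite p \<and> (\<forall>x\<in>p. P x)}"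
    by (rule span_least) auto
  then show ?thesis using assms by auto
qed

lemma card_sd_parity:
  assumes "finite C"
  shows "odd (card (C \<inter> sd p q)) \<longleftrightarrow> (odd (card (C \<inter> p)) \<noteq> odd (card (C \<inter> q)))"
proof -
  define A where "A = C \<inter> (p - q)"
  define B where "B = C \<inter> (q - p)"
  define I where "I = C \<inter> p \<inter> q"
  have f: "finite A" "finite B" "finite I" using assms by (auto simp: A_def B_def I_def)
  have e1: "C \<inter> p = A \<union> I" by (auto simp: A_def I_def)
  have e2: "C \<inter> q = B \<union> I" by (auto simp: B_def I_def)
  have e3: "C \<inter> sd p q = A \<union> B" by (auto simp: sd_def A_def B_def)
  have c1: "card (C \<inter> p) = card A + card I" unfolding e1
    by (rule card_Un_disjoint) (use f in \<open>auto simp: A_def I_def\<close>)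
  have c2: "card (C \<inter> q) = card B + card I" unfolding e2
    by (rule card_Un_disjoint) (use f in \<open>auto simp: B_def I_def\<close>)
  have c3: "card (C \<inter> sd p q) = card A + card B" unfolding e3
    by (rule card_Un_disjoint) (use f in \<open>auto simp: A_def B_def\<close>)
  show ?thesis unfolding c1 c2 c3 by (auto simp: even_add)
qed

definition phi :: "mono set \<Rightarrow> (mono \<Rightarrow> mono set) \<Rightarrow> poly \<Rightarrow> poly" where
  "phi E C p = {e \<in> E. odd (card (C e \<inter> p))}"

lemma phi_sd:
  assumes "\<forall>e\<in>E. finite (C e)"
  shows "phi E C (sd p q) = sd (phi E C p) (phi E C q)"
  using assms card_sd_parity by (auto simp: phi_def sd_def)

lemma phi_empty[simp]: "phi E C {} = {}" by (simp add: phi_def)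

lemma sum_le_pointwise:
  fixes a b :: "nat list"
  shows "length a = length b \<Longrightarrow> \<forall>j<length a. a ! j \<le> b ! j \<Longrightarrow> sum_list a \<le> sum_list b"
proof (induction a arbitrary: b)
  case Nil then show ?case by simp
next
  case (Cons x xs)
  then obtain y ys where b: "b = y # ys" by (cases b) auto
  have "x \<le> y" using Cons.prems b by force
  moreover have "sum_list xs \<le> sum_list ys"
    using Cons.prems b by (intro Cons.IH) force+
  ultimately show ?case using b by simp
qed

lemma sq_mono_Nil: "sq_mono k [] = (if k = 0 then {[]} else {})"
  by (auto simp: sq_mono_def)

lemma sq_mono_Cons:
  "b \<in> sq_mono k (x # xs) \<longleftrightarrow> (\<exists>y bs. b = y # bs \<and> x \<le> y \<and> y - x \<le> k \<and> odd (x choose (y - x))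
      \<and> bs \<in> sq_mono (k - (y - x)) xs)"
proof
  assume "b \<in> sq_mono k (x # xs)"
  then have L: "length b = Suc (length xs)" and P: "\<forall>j<Suc (length xs). (x#xs)!j \<le> b!j"
    and S: "sum_list b = sum_list (x#xs) + k"
    and O: "\<forall>j<Suc (length xs). odd ((x#xs)!j choose (b!j - (x#xs)!j))"
    by (auto simp: sq_mono_def)
  obtain y bs where b: "b = y # bs" using L by (cases b) auto
  have lb: "length bs = length xs" using L b by simp
  have P1: "x \<le> y" using P b by force
  have P2: "\<forall>j<length xs. xs!j \<le> bs!j" using P b by auto
  have O1: "odd (x choose (y - x))" using O b by force
  have O2: "\<forall>j<length xs. odd (xs!j choose (bs!j - xs!j))" using O b by auto
  have "sum_list xs \<le> sum_list bs" using lb P2 by (intro sum_le_pointwise) auto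
  then have k1: "y - x \<le> k" and k2: "sum_list bs = sum_list xs + (k - (y - x))" using S b P1 by auto
  have "bs \<in> sq_mono (k - (y - x)) xs" unfolding sq_mono_def using lb P2 O2 k2 by auto
  then show "\<exists>y bs. b = y # bs \<and> x \<le> y \<and> y - x \<le> k \<and> odd (x choose (y - x))
      \<and> bs \<in> sq_mono (k - (y - x)) xs" using b P1 k1 O1 by blast
next
  assume "\<exists>y bs. b = y # bs \<and> x \<le> y \<and> y - x \<le> k \<and> odd (x choose (y - x))
      \<and> bs \<in> sq_mono (k - (y - x)) xs"
  then obtain y bs where b: "b = y # bs" and h: "x \<le> y" "y - x \<le> k" "odd (x choose (y - x))"
     "bs \<in> sq_mono (k - (y - x)) xs" by blast
  from h(4) have lb: "length bs = length xs" and P2: "\<forall>j<length xs. xs!j \<le> bs!j"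
    and S: "sum_list bs = sum_list xs + (k - (y - x))"
    and O2: "\<forall>j<length xs. odd (xs!j choose (bs!j - xs!j))" by (auto simp: sq_mono_def)
  have "length (y # bs) = length (x # xs)" using lb by simp
  moreover have "\<forall>j<length (x # xs). (x # xs) ! j \<le> (y # bs) ! j"
    using P2 h(1) by (simp add: All_less_Suc2)
  moreover have "sum_list (y # bs) = sum_list (x # xs) + k" using S h(1,2) by simp
  moreover have "\<forall>j<length (x # xs). odd ((x # xs) ! j choose ((y # bs) ! j - (x # xs) ! j))"
    using O2 h(3) by (simp add: All_less_Suc2)
  ultimately show "b \<in> sq_mono k (x # xs)" unfolding sq_mono_def b by blast
qed

lemma sqlist_correct: "set (sqlist k a) = sq_mono k a"
proof (induction a arbitrary: k)
  case Nil then show ?case by (simp add: sq_mono_Nil)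
next
  case (Cons x xs)
  show ?case
  proof (rule set_eqI)
    fix b
    show "b \<in> set (sqlist k (x # xs)) \<longleftrightarrow> b \<in> sq_mono k (x # xs)"
    proof
      assume "b \<in> set (sqlist k (x # xs))"
      then obtain j bs where "j \<le> k" "odd (x choose j)" "b = (x + j) # bs" "bs \<in> sq_mono (k - j) xs"
        using Cons.IH by (auto split: if_splits)
      then show "b \<in> sq_mono k (x # xs)" unfolding sq_mono_Cons by auto
    next
      assume "b \<in> sq_mono k (x # xs)"
      then obtain y bs where h: "b = y # bs" "x \<le> y" "y - x \<le> k" "odd (x choose (y - x))"
        "bs \<in> sq_mono (k - (y - x)) xs" unfolding sq_mono_Cons by blast
      then have "y = x + (y - x)" by simp
      then show "b \<in> set (sqlist k (x # xs))" using h Cons.IH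
        by (auto intro!: bexI[of _ "y - x"])
    qed
  qed
qed

lemma finite_sq_mono: "finite (sq_mono k a)"
  by (metis List.finite_set sqlist_correct)

lemma sq_mono_pos: "a \<in> posmono h \<Longrightarrow> sq_mono k a \<subseteq> posmono h"
proof
  fix b assume a: "a \<in> posmono h" and b: "b \<in> sq_mono k a"
  have lb: "length b = length a" using b unfolding sq_mono_def by blast
  have le: "\<forall>j<length a. a!j \<le> b!j" using b unfolding sq_mono_def by blast
  have la: "length a = h" "\<forall>x\<in>set a. 0<x" using a unfolding posmono_def by blast+
  have "\<forall>x\<in>set b. 0 < x"
  proof
    fix x assume "x \<in> set b"
    then obtain j where j: "j < length b" "b ! j = x" unfolding in_set_conv_nth by blast
    have "a ! j \<in> set a" using j lb by simp
    then have "0 < a ! j" using la by blast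
    moreover have "a ! j \<le> b ! j" using le j(1) lb by simp
    ultimately show "0 < x" using j by simp
  qed
  then show "b \<in> posmono h" using lb la unfolding posmono_def by simp
qed

lemma sq_mono_sum: "b \<in> sq_mono k a \<Longrightarrow> sum_list b = sum_list a + k"
  by (simp add: sq_mono_def)

lemma mem_comps_Suc:
  "a \<in> set (comps (Suc n) s) \<longleftrightarrow> (\<exists>x xs. a = x # xs \<and> 1 \<le> x \<and> x \<le> s \<and> xs \<in> set (comps n (s - x)))"
proof -
  have A: "set (comps (Suc n) s) = (\<Union>x\<in>{1..<Suc s}. Cons x ` set (comps n (s - x)))"
    by (simp del: upt_Suc)
  show ?thesis unfolding A by (auto simp del: upt_Suc comps.simps)
qed

lemma comps_complete:
  "length a = n \<Longrightarrow> \<forall>x\<in>set a. 0 < x \<Longrightarrow> sum_list a \<le> s \<Longrightarrow> a \<in> set (comps n s)"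
proof (induction n arbitrary: a s)
  case 0 then show ?case by simp
next
  case (Suc n)
  obtain x xs where a: "a = x # xs" using Suc.prems by (cases a) auto
  have "xs \<in> set (comps n (s - x))" using Suc.prems a by (intro Suc.IH) auto
  moreover have "1 \<le> x" "x \<le> s" using Suc.prems a by auto
  ultimately show ?case unfolding mem_comps_Suc a by blast
qed

lemma comps_sound:
  "a \<in> set (comps n s) \<Longrightarrow> length a = n \<and> (\<forall>x\<in>set a. 0 < x) \<and> sum_list a \<le> s"
proof (induction n arbitrary: a s)
  case 0 then show ?case by simp
next
  case (Suc n)
  then obtain x xs where "a = x # xs" "1 \<le> x" "x \<le> s" "xs \<in> set (comps n (s - x))"
    unfolding mem_comps_Suc by blast
  with Suc.IH[of xs "s - x"] show ?case by auto
qed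

lemma weight_zero: "\<forall>x\<in>set a. x < 2 ^ i \<Longrightarrow> weight a i = 0"
  by (induction a) (auto simp: weight_def)

lemma weight_zero10:
  assumes "sum_list a = (10::nat)" "4 \<le> i"
  shows "weight a i = 0"
proof (rule weight_zero, intro ballI)
  fix x assume "x \<in> set a"
  then have "x \<le> 10" using assms member_le_sum_list by fastforce
  moreover have "(2::nat) ^ 4 \<le> 2 ^ i" using assms by (intro power_increasing) auto
  ultimately show "x < 2 ^ i" by simp
qed

lemma wB:
  assumes "\<forall>i\<ge>4. u i = 0" "\<forall>i\<ge>4. v i = 0"
  shows "wle u v \<longleftrightarrow> wleB u v" "wless u v \<longleftrightarrow> wlessB u v"
proof -
  have eqB: "wlessB u v \<longleftrightarrow> (\<exists>k<4. (\<forall>i<k. u i = v i) \<and> u k < v k)"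
    unfolding wlessB_def by (auto simp: list_ex_iff list_all_iff atLeast0LessThan)
  have l: "wless u v \<longleftrightarrow> wlessB u v"
    unfolding eqB wless_def
  proof
    assume "\<exists>k. (\<forall>i<k. u i = v i) \<and> u k < v k"
    then obtain k where k: "\<forall>i<k. u i = v i" "u k < v k" by blast
    then have "k < 4" using assms by (metis not_less not_less_zero)
    then show "\<exists>k<4. (\<forall>i<k. u i = v i) \<and> u k < v k" using k by blast
  qed blast
  have e: "u = v \<longleftrightarrow> (\<forall>i<4. u i = v i)"
  proof
    assume "\<forall>i<4. u i = v i"
    then show "u = v" using assms by (metis ext not_less)
  qed simp
  show "wless u v \<longleftrightarrow> wlessB u v" by (rule l)
  show "wle u v \<longleftrightarrow> wleB u v"
    unfolding wle_def l e wleB_def by (auto simp: list_all_iff wlessB_def)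
qed

lemma wvec_zero: "length w \<le> 4 \<Longrightarrow> 4 \<le> i \<Longrightarrow> wvec w i = 0"
  by (simp add: wvec_def)

lemma Gl_iff:
  assumes "length w \<le> 4"
  shows "a \<in> set (Gl h w) \<longleftrightarrow> (a \<in> posmono h \<and> sum_list a = 10 \<and> wle (weight a) (wvec w))"
proof
  assume "a \<in> set (Gl h w)"
  then have a: "a \<in> set (comps h 10)" "sum_list a = 10" "wleB (weight a) (wvec w)" by (auto simp: Gl_def)
  then show "a \<in> posmono h \<and> sum_list a = 10 \<and> wle (weight a) (wvec w)"
    using comps_sound[OF a(1)] wB(1)[of "weight a" "wvec w"] weight_zero10[OF a(2)] wvec_zero[OF assms]
    by (auto simp: posmono_def)
next
  assume a: "a \<in> posmono h \<and> sum_list a = 10 \<and> wle (weight a) (wvec w)"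
  then have "a \<in> set (comps h 10)" by (intro comps_complete) (auto simp: posmono_def)
  then show "a \<in> set (Gl h w)"
    using a wB(1)[of "weight a" "wvec w"] weight_zero10[of a] wvec_zero[OF assms]
    by (auto simp: Gl_def)
qed

lemma Gltl_iff:
  assumes "length w \<le> 4"
  shows "a \<in> set (Gltl h w) \<longleftrightarrow> (a \<in> posmono h \<and> sum_list a = 10 \<and> wless (weight a) (wvec w))"
proof
  assume "a \<in> set (Gltl h w)"
  then have a: "a \<in> set (comps h 10)" "sum_list a = 10" "wlessB (weight a) (wvec w)" by (auto simp: Gltl_def)
  then show "a \<in> posmono h \<and> sum_list a = 10 \<and> wless (weight a) (wvec w)"
    using comps_sound[OF a(1)] wB(2)[of "weight a" "wvec w"] weight_zero10[OF a(2)] wvec_zero[OF assms]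
    by (auto simp: posmono_def)
next
  assume a: "a \<in> posmono h \<and> sum_list a = 10 \<and> wless (weight a) (wvec w)"
  then have "a \<in> set (comps h 10)" by (intro comps_complete) (auto simp: posmono_def)
  then show "a \<in> set (Gltl h w)"
    using a wB(2)[of "weight a" "wvec w"] weight_zero10[of a] wvec_zero[OF assms]
    by (auto simp: Gltl_def)
qed

fun xsl :: "poly list \<Rightarrow> poly" where
  "xsl [] = {}"
| "xsl (p # ps) = sd p (xsl ps)"

lemma mem_xsl: "x \<in> xsl Ps \<longleftrightarrow> odd (length (filter (\<lambda>P. x \<in> P) Ps))"
  by (induction Ps) (auto simp: sd_def)

lemma set_xorL: "set (xorL Ls) = xsl (map set Ls)"
proof (rule set_eqI)
  fix x
  have "length (filter (\<lambda>P. x \<in> P) (map set Ls)) = length (filter (\<lambda>L. x \<in> set L) Ls)"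
    by (induction Ls) auto
  moreover have "x \<notin> set (concat Ls) \<Longrightarrow> filter (\<lambda>L. x \<in> set L) Ls = []"
    by (induction Ls) auto
  ultimately show "x \<in> set (xorL Ls) \<longleftrightarrow> x \<in> xsl (map set Ls)"
    unfolding mem_xsl xorL_def by (cases "x \<in> set (concat Ls)") auto
qed

lemma xsl_closed: "closed S \<Longrightarrow> \<forall>p\<in>set Ps. p \<in> S \<Longrightarrow> xsl Ps \<in> S"
  by (induction Ps) (auto simp: closed_def)

lemma Ppos_eq: "Ppos h = {p. finite p \<and> p \<subseteq> posmono h}"
proof
  show "Ppos h \<subseteq> {p. finite p \<and> p \<subseteq> posmono h}"
    unfolding Ppos_def using span_sub[of _ "\<lambda>a. a \<in> posmono h"] by blast
  show "{p. finite p \<and> p \<subseteq> posmono h} \<subseteq> Ppos h"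
    unfolding Ppos_def using fin_span[of _ "\<lambda>a. a \<in> posmono h"] by blast
qed

lemma Sq_pos:
  assumes "finite p" "p \<subseteq> posmono h"
  shows "finite (Sq i p) \<and> Sq i p \<subseteq> posmono h"
  using assms
proof (induction p rule: finite_induct)
  case empty then show ?case by (simp add: Sq_def)
next
  case (insert a p)
  have "Sq i (insert a p) = sd (Sq i p) (sq_mono i a)"
    unfolding Sq_def using insert by (simp add: xorsum_insert)
  then show ?case using insert sq_mono_pos[of a h i] finite_sq_mono[of i a] by (auto simp: sd_def)
qed

lemma Sqs_Ppos: "x \<in> Ppos h \<Longrightarrow> Sqs is x \<in> Ppos h"
  by (induction "is") (auto simp: Ppos_eq Sq_pos)

lemma Sq_single: "Sq k {m} = sq_mono k m"
  unfolding Sq_def using xorsum_insert[of "{}" m "sq_mono k"] by simp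

lemma sq_mono_hit:
  assumes "m \<in> posmono h" "0 < k"
  shows "sq_mono k m \<in> hitPpos h"
proof -
  have "{m} \<in> Ppos h" using assms by (simp add: Ppos_eq)
  then have "Sqs [k] {m} \<in> {Sqs is x |is x. is \<noteq> [] \<and> (\<forall>i\<in>set is. 0 < i) \<and> x \<in> Ppos h}"
    using assms by (intro CollectI exI[of _ "[k]"] exI[of _ "{m}"]) simp
  then have "Sqs [k] {m} \<in> hitPpos h" unfolding hitPpos_def by (rule span_gen)
  then show ?thesis by (simp add: Sq_single)
qed

lemma hit_phi:
  assumes fin: "\<forall>e\<in>E. finite (C e)"
    and H: "\<And>a i. a \<in> posmono h \<Longrightarrow> 0 < i \<Longrightarrow> phi E C (sq_mono i a) = {}"
  shows "hitPpos h \<subseteq> {p. phi E C p = {}}"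
proof -
  have cl: "closed {p. phi E C p = {}}" unfolding closed_def using phi_sd[OF fin] by auto
  have gens: "phi E C (Sqs is x) = {}"
    if h: "is \<noteq> []" "\<forall>i\<in>set is. 0 < i" "x \<in> Ppos h" for "is" :: "nat list" and x
  proof -
    obtain i js where isd: "is = i # js" using h by (cases "is") auto
    have i: "0 < i" using h isd by auto
    have "Sqs js x \<in> Ppos h" using h(3) by (rule Sqs_Ppos)
    then have p: "finite (Sqs js x)" "Sqs js x \<subseteq> posmono h" by (auto simp: Ppos_eq)
    have "phi E C (Sq i p) = {}" if "finite p" "p \<subseteq> posmono h" for p
      using that
    proof (induction p rule: finite_induct)
      case empty then show ?case by (simp add: Sq_def)
    next
      case (insert a p)
      have "Sq i (insert a p) = sd (Sq i p) (sq_mono i a)"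
        unfolding Sq_def using insert by (simp add: xorsum_insert)
      then show ?case using insert H[of a i] i phi_sd[OF fin] by auto
    qed
    then show "phi E C (Sqs is x) = {}" using p isd by simp
  qed
  show ?thesis unfolding hitPpos_def
    apply (rule span_least[OF cl])
    apply (rule subsetI)
    apply (simp only: mem_Collect_eq)
    apply (elim exE conjE)
    apply (metis gens)
    done
qed

lemma Pwlt_sub: "Pwlt h n w \<subseteq> Pw h n w"
  unfolding Pwlt_def Pw_def by (rule span_mono) (auto simp: wle_def)

lemma Rel_sub: "Rel h n w \<subseteq> Pw h n w"
proof
  fix r assume "r \<in> Rel h n w"
  then obtain x y where r: "r = (x - y) \<union> (y - x)" and x: "x \<in> hitPpos h \<inter> Pw h n w"
    and y: "y \<in> Pwlt h n w"
    unfolding Rel_def by blast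
  have y': "y \<in> Pw h n w" using y Pwlt_sub by blast
  have "sd x y \<in> Pw h n w" using x y' unfolding Pw_def by (intro span_sd) auto
  then show "r \<in> Pw h n w" using r by (simp add: sd_def)
qed

lemma span_BRel_sub:
  assumes "B \<subseteq> Pw h n w"
  shows "F2span (B \<union> Rel h n w) \<subseteq> Pw h n w"
proof -
  have "B \<union> Rel h n w \<subseteq> Pw h n w" using assms Rel_sub by (rule Un_least)
  then show ?thesis unfolding Pw_def by (rule span_least[OF span_closed])
qed

lemma QPdim_zero:
  assumes "\<forall>a. \<not> (a \<in> posmono h \<and> sum_list a = n \<and> wle (weight a) (wvec w))"
  shows "QPdim h n w = 0"
proof -
  have "{{a} |a. a \<in> posmono h \<and> sum_list a = n \<and> wle (weight a) (wvec w)} = {}"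
    using assms by blast
  then have "Pw h n w = F2span {}" unfolding Pw_def by (rule arg_cong[where f=F2span])
  also have "\<dots> = {{}}" unfolding F2span_def by auto
  finally have pw: "Pw h n w = {{}}" .
  have "F2span ({} \<union> Rel h n w) = Pw h n w"
    using span_BRel_sub[of "{}" h n w] span_empty pw by auto
  then show ?thesis unfolding QPdim_def
    apply (intro Least_eq_0)
    apply (rule exI[of _ "{}"])
    by (simp add: pw)
qed

lemma sortedL_imp: "sortedL xs \<Longrightarrow> sorted_wrt (<) xs"
proof (induction xs rule: sortedL.induct)
  case (1 x y zs)
  then have "x < y" "sorted_wrt (<) (y # zs)" by auto
  then show ?case by (auto intro: less_trans)
qed auto

lemma msd_correct:
  "sorted_wrt (<) xs \<Longrightarrow> sorted_wrt (<) ys \<Longrightarrow>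
   sorted_wrt (<) (msd xs ys) \<and> set (msd xs ys) = (set xs - set ys) \<union> (set ys - set xs)"
proof (induction xs ys rule: msd.induct)
  case (3 x xs y ys)
  show ?case
  proof (cases "x = y")
    case True
    with 3 show ?thesis by auto
  next
    case False
    show ?thesis
    proof (cases "x < y")
      case True
      with 3 False have IH: "sorted_wrt (<) (msd xs (y # ys))"
        "set (msd xs (y # ys)) = (set xs - set (y # ys)) \<union> (set (y # ys) - set xs)" by auto
      have xs1: "\<forall>z\<in>set xs. x < z" using "3.prems"(1) by simp
      have ys1: "\<forall>z\<in>set (y # ys). x < z" using "3.prems"(2) True less_trans[OF True] by auto
      have "\<forall>z\<in>set (msd xs (y # ys)). x < z" using IH(2) xs1 ys1 by auto
      then show ?thesis using IH True False xs1 ys1 by auto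
    next
      case nle: False
      then have yx: "y < x" using False by simp
      with 3 False nle have IH: "sorted_wrt (<) (msd (x # xs) ys)"
        "set (msd (x # xs) ys) = (set (x # xs) - set ys) \<union> (set ys - set (x # xs))" by auto
      have ys1: "\<forall>z\<in>set ys. y < z" using "3.prems"(2) by simp
      have xs1: "\<forall>z\<in>set (x # xs). y < z" using "3.prems"(1) yx less_trans[OF yx] by auto
      have "\<forall>z\<in>set (msd (x # xs) ys). y < z" using IH(2) xs1 ys1 by auto
      then show ?thesis using IH yx False nle xs1 ys1 by auto
    qed
  qed
qed auto

lemma icount_correct:
  "sorted_wrt (<) xs \<Longrightarrow> sorted_wrt (<) ys \<Longrightarrow> icount xs ys = card (set xs \<inter> set ys)"
proof (induction xs ys rule: icount.induct)
  case (3 x xs y ys)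
  show ?case
  proof (cases "x = y")
    case True
    have "set (x # xs) \<inter> set (y # ys) = insert x (set xs \<inter> set ys)" using True by auto
    moreover have "x \<notin> set xs \<inter> set ys" using 3(4) by auto
    ultimately show ?thesis using True 3 by simp
  next
    case False
    show ?thesis
    proof (cases "x < y")
      case True
      have "set (x # xs) \<inter> set (y # ys) = set xs \<inter> set (y # ys)" using True 3(5) by auto
      then show ?thesis using True False 3 by simp
    next
      case nle: False
      then have yx: "y < x" using False by simp
      have "set (x # xs) \<inter> set (y # ys) = set (x # xs) \<inter> set ys" using yx 3(4) by auto
      then show ?thesis using yx False nle 3 by simp
    qed
  qed
qed auto

lemma xorM_correct:
  "\<forall>L\<in>set Ls. sorted_wrt (<) L \<Longrightarrow> sorted_wrt (<) (xorM Ls) \<and> set (xorM Ls) = xsl (map set Ls)"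
proof (induction Ls)
  case Nil then show ?case by (simp add: xorM_def)
next
  case (Cons L Ls)
  then have "sorted_wrt (<) (xorM Ls)" "set (xorM Ls) = xsl (map set Ls)" by auto
  moreover have "xorM (L # Ls) = msd L (xorM Ls)" by (simp add: xorM_def)
  ultimately show ?case using msd_correct[of L "xorM Ls"] Cons.prems by (simp add: sd_def)
qed

lemma card_pow_span:
  assumes "finite X"
  shows "finite (F2span X) \<and> card (F2span X) \<le> 2 ^ card X"
proof -
  have "F2span X \<subseteq> (\<lambda>F. xorsum id F) ` Pow X" unfolding F2span_def by blast
  moreover have "card ((\<lambda>F. xorsum id F) ` Pow X) \<le> card (Pow X)" using assms by (intro card_image_le) simp
  moreover have "card (Pow X) = 2 ^ card X" using assms by (rule card_Pow)
  moreover have "finite ((\<lambda>F. xorsum id F) ` Pow X)" using assms by simp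
  ultimately show ?thesis by (metis card_mono finite_subset order_trans)
qed

theorem QPdim_chk:
  assumes C: "chk h w G Glt tab rels" and lw: "length w \<le> 4"
  shows "QPdim h 10 w = length tab"
proof -
  define El where "El = map fst tab"
  define Cl where "Cl = (\<lambda>e. the (map_of tab e))"
  define E where "E = set El"
  define Cs where "Cs = (\<lambda>e. set (Cl e))"
  define P where "P = (\<lambda>a. a \<in> posmono h \<and> sum_list a = (10::nat) \<and> wle (weight a) (wvec w))"
  define Plt where "Plt = (\<lambda>a. a \<in> posmono h \<and> sum_list a = (10::nat) \<and> wless (weight a) (wvec w))"
  have Pw_eq: "Pw h 10 w = F2span {{a} | a. P a}" by (simp add: Pw_def P_def)
  have Pwlt_eq: "Pwlt h 10 w = F2span {{a} | a. Plt a}" by (simp add: Pwlt_def Plt_def)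
  have k0: "Gl h w = G" "Gltl h w = Glt" using C unfolding chk_def by blast+
  have GP: "a \<in> set G \<longleftrightarrow> P a" for a using Gl_iff[OF lw, of a h] k0 by (simp add: P_def)
  have GPlt: "a \<in> set Glt \<longleftrightarrow> Plt a" for a using Gltl_iff[OF lw, of a h] k0 by (simp add: Plt_def)
  have c1: "distinct El" using C unfolding chk_def El_def by blast
  have k2: "list_all (\<lambda>(e, c). e \<in> set G \<and> sortedL c
      \<and> list_all (\<lambda>x. length x = h \<and> sum_list x = 10 \<and> x \<notin> set Glt) c
      \<and> list_all (\<lambda>e'. (e' \<in> set c) = (e' = e)) (map fst tab)) tab"
    using C unfolding chk_def by blast
  have tabCl: "Cl e = c" if "(e, c) \<in> set tab" for e c
    using map_of_is_SomeI[OF c1[unfolded El_def] that] by (simp add: Cl_def)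
  have inE: "\<exists>c. (e, c) \<in> set tab" if "e \<in> E" for e using that unfolding E_def El_def by auto
  have c3: "\<forall>e\<in>E. P e \<and> sorted_wrt (<) (Cl e) \<and> (\<forall>c\<in>Cs e. length c = h \<and> sum_list c = 10 \<and> \<not> Plt c)
       \<and> (\<forall>e'\<in>E. e' \<in> Cs e \<longleftrightarrow> e' = e)"
  proof
    fix e assume "e \<in> E"
    then obtain c where ec: "(e, c) \<in> set tab" using inE by blast
    then have "e \<in> set G \<and> sortedL c
      \<and> list_all (\<lambda>x. length x = h \<and> sum_list x = 10 \<and> x \<notin> set Glt) c
      \<and> list_all (\<lambda>e'. (e' \<in> set c) = (e' = e)) (map fst tab)"
      using k2 unfolding list_all_iff by fastforce
    then show "P e \<and> sorted_wrt (<) (Cl e) \<and> (\<forall>c\<in>Cs e. length c = h \<and> sum_list c = 10 \<and> \<not> Plt c)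
       \<and> (\<forall>e'\<in>E. e' \<in> Cs e \<longleftrightarrow> e' = e)"
      using tabCl[OF ec] sortedL_imp unfolding list_all_iff GP GPlt Cs_def E_def El_def by auto
  qed
  have c2: "\<forall>e\<in>E. P e" using c3 by blast
  have k4: "list_all (\<lambda>a. chkS tab (sqlist (10 - sum_list a) a)) (comps h 9)"
    using C unfolding chk_def by blast
  have c4: "sorted_wrt (<) (sqlist (10 - sum_list a) a) \<and>
      (\<forall>e\<in>E. even (icount (Cl e) (sqlist (10 - sum_list a) a)))" if "a \<in> set (comps h 9)" for a
  proof -
    have "sortedL (sqlist (10 - sum_list a) a) \<and>
       (\<forall>(e, c)\<in>set tab. even (icount c (sqlist (10 - sum_list a) a)))"
      using k4 that unfolding list_all_iff chkS_def by blast
    then show ?thesis using tabCl inE sortedL_imp by fastforce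
  qed
  have k5: "list_all (\<lambda>a. a \<in> set (map fst tab) \<or> a \<in> set Glt \<or> a \<in> set (map fst rels)) G"
    using C unfolding chk_def by blast
  have c5: "a \<in> E \<or> Plt a \<or> a \<in> set (map fst rels)" if "P a" for a
  proof -
    have "a \<in> set G" using that GP by simp
    then show ?thesis using k5 unfolding list_all_iff E_def El_def GPlt by blast
  qed
  have k6: "list_all (\<lambda>(a, ps, ys, bs). list_all (\<lambda>(k,m). 0 < k \<and> length m = h \<and> list_all (\<lambda>x. 0 < x) m) ps
        \<and> chkR G a ys bs (map (\<lambda>(k,m). sqlist k m) ps)
        \<and> list_all (\<lambda>y. y \<in> set Glt) ys \<and> list_all (\<lambda>b. b \<in> set (map fst tab)) bs) rels"
    using C unfolding chk_def by blast
  have c6: "(\<forall>(k,m)\<in>set ps. 0 < k \<and> m \<in> posmono h)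
      \<and> (\<forall>x\<in>set (xorM (map (\<lambda>(k,m). sqlist k m) ps)). P x)
      \<and> set (xorM (map (\<lambda>(k,m). sqlist k m) ps)) = xsl (map set (map (\<lambda>(k,m). sqlist k m) ps))
      \<and> {a} = sd (sd (set (xorM (map (\<lambda>(k,m). sqlist k m) ps))) (set ys)) (set bs)
      \<and> (\<forall>y\<in>set ys. Plt y) \<and> set bs \<subseteq> E"
    if "(a, ps, ys, bs) \<in> set rels" for a ps ys bs
  proof -
    define Ss where "Ss = map (\<lambda>(k,m). sqlist k m) ps"
    have h1: "(\<forall>x\<in>set ps. case x of (k, m) \<Rightarrow> 0 < k \<and> length m = h \<and> (\<forall>x\<in>set m. 0 < x))
      \<and> chkR G a ys bs Ss \<and> (\<forall>y\<in>set ys. y \<in> set Glt) \<and> (\<forall>b\<in>set bs. b \<in> set (map fst tab))"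
      using bspec[OF k6[unfolded list_all_iff] that] by (simp add: list_all_iff Ss_def)
    then have h2: "\<forall>L\<in>set Ss. sorted_wrt (<) L" "sortedL ys" "sortedL bs"
      "\<forall>x\<in>set (xorM Ss). x \<in> set G" "xorM [xorM Ss, ys, bs] = [a]"
      unfolding chkR_def chkR2_def list_all_iff using sortedL_imp by auto
    have X: "sorted_wrt (<) (xorM Ss) \<and> set (xorM Ss) = xsl (map set Ss)"
      using xorM_correct[OF h2(1)] .
    have "set (xorM [xorM Ss, ys, bs]) = xsl (map set [xorM Ss, ys, bs])"
      using xorM_correct[of "[xorM Ss, ys, bs]"] X h2(2,3) sortedL_imp by auto
    then have "{a} = sd (set (xorM Ss)) (sd (set ys) (set bs))" using h2(5) by simp
    then have A: "{a} = sd (sd (set (xorM Ss)) (set ys)) (set bs)" by (simp add: sd_assoc)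
    show ?thesis using h1 h2 X A unfolding GP GPlt E_def El_def posmono_def Ss_def by auto
  qed
  have finC: "\<forall>e\<in>E. finite (Cs e)" by (simp add: Cs_def)
  have finE: "finite E" by (simp add: E_def)
  define B where "B = {{a} | a. a \<in> E}"
  have cardB: "card B = card E"
  proof -
    have "B = (\<lambda>a. {a}) ` E" unfolding B_def by blast
    then show ?thesis by (simp add: card_image inj_on_def)
  qed
  have finB: "finite B" using finE unfolding B_def by simp
  have BPw: "B \<subseteq> Pw h 10 w" unfolding B_def Pw_eq using c2 by (auto intro: span_gen)
  have hitPw: "{} \<in> hitPpos h \<inter> Pw h 10 w" unfolding hitPpos_def Pw_def by (simp add: span_empty)
  have span_eq: "F2span (B \<union> Rel h 10 w) = Pw h 10 w"
  proof
    show "F2span (B \<union> Rel h 10 w) \<subseteq> Pw h 10 w" by (rule span_BRel_sub[OF BPw])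
  next
    let ?S = "F2span (B \<union> Rel h 10 w)"
    have gen: "{a} \<in> ?S" if Pa: "P a" for a
    proof -
      consider "a \<in> E" | "Plt a" | "a \<in> set (map fst rels)" using c5[OF Pa] by blast
      then show ?thesis
      proof cases
        case 1 then show ?thesis unfolding B_def by (intro span_gen) auto
      next
        case 2
        have "{a} \<in> Pwlt h 10 w" unfolding Pwlt_eq using 2 by (intro span_gen) auto
        then have "({} - {a}) \<union> ({a} - {}) \<in> Rel h 10 w" unfolding Rel_def using hitPw by blast
        then show ?thesis by (intro span_gen) auto
      next
        case 3
        then obtain t where t: "t \<in> set rels" "fst t = a" by auto
        then have "(a, fst (snd t), fst (snd (snd t)), snd (snd (snd t))) \<in> set rels" by auto
        then obtain ps ys bs where r: "(a, ps, ys, bs) \<in> set rels" by blast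
        note cc = c6[OF r]
        define X where "X = xorM (map (\<lambda>(k,m). sqlist k m) ps)"
        have "set X = xsl (map set (map (\<lambda>(k,m). sqlist k m) ps))" using cc X_def by simp
        also have "map set (map (\<lambda>(k,m). sqlist k m) ps) = map (\<lambda>(k,m). sq_mono k m) ps"
          by (auto simp: sqlist_correct)
        finally have X: "set X = xsl (map (\<lambda>(k,m). sq_mono k m) ps)" .
        have "xsl (map (\<lambda>(k,m). sq_mono k m) ps) \<in> hitPpos h"
          unfolding hitPpos_def
        proof (rule xsl_closed[OF span_closed], intro ballI)
          fix q assume "q \<in> set (map (\<lambda>(k,m). sq_mono k m) ps)"
          then obtain k m where "(k, m) \<in> set ps" "q = sq_mono k m" by auto
          then show "q \<in> F2span {Sqs is x |is x. is \<noteq> [] \<and> (\<forall>i\<in>set is. 0 < i) \<and> x \<in> Ppos h}"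
            using cc sq_mono_hit[of m h k] unfolding hitPpos_def by fastforce
        qed
        then have Xh: "set X \<in> hitPpos h" using X by simp
        have XP: "set X \<in> Pw h 10 w" unfolding Pw_eq
        proof (rule fin_span)
          show "finite (set X)" by simp
          show "\<forall>x\<in>set X. P x" using cc unfolding X_def by blast
        qed
        have YP: "set ys \<in> Pwlt h 10 w" unfolding Pwlt_eq using cc by (intro fin_span) auto
        have "(set X - set ys) \<union> (set ys - set X) \<in> Rel h 10 w"
          unfolding Rel_def using Xh XP YP by blast
        then have R: "sd (set X) (set ys) \<in> ?S" unfolding sd_def by (intro span_gen) auto
        have "set bs \<in> F2span B" unfolding B_def using cc by (intro fin_span) auto
        then have Bs: "set bs \<in> ?S" using span_mono[of B "B \<union> Rel h 10 w"] by auto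
        have "{a} = sd (sd (set X) (set ys)) (set bs)" using cc X_def by simp
        then show ?thesis using R Bs span_sd by metis
      qed
    qed
    show "Pw h 10 w \<subseteq> ?S" unfolding Pw_eq
      by (rule span_least[OF span_closed]) (use gen in blast)
  qed
  let ?phi = "phi E Cs"
  let ?K = "{p. ?phi p = {}}"
  have Kc: "closed ?K" unfolding closed_def using phi_sd[OF finC] by auto
  have Hsq: "?phi (sq_mono i a) = {}" if a: "a \<in> posmono h" and i: "0 < i" for a i
  proof (cases "sum_list a + i = 10")
    case True
    then have "a \<in> set (comps h 9)" using a i by (intro comps_complete) (auto simp: posmono_def)
    then have ev: "sorted_wrt (<) (sqlist i a) \<and> (\<forall>e\<in>E. even (icount (Cl e) (sqlist i a)))"
      using c4 True by (metis add_diff_cancel_left')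
    have "even (card (Cs e \<inter> sq_mono i a))" if "e \<in> E" for e
    proof -
      have ic: "icount (Cl e) (sqlist i a) = card (set (Cl e) \<inter> set (sqlist i a))"
        using ev c3 that by (intro icount_correct) auto
      have "even (icount (Cl e) (sqlist i a))" using ev that by blast
      then show ?thesis unfolding ic Cs_def sqlist_correct .
    qed
    then show ?thesis unfolding phi_def by auto
  next
    case False
    have "Cs e \<inter> sq_mono i a = {}" if "e \<in> E" for e
      using c3 that False sq_mono_sum by fastforce
    then show ?thesis unfolding phi_def by auto
  qed
  have hitK: "hitPpos h \<subseteq> ?K" by (rule hit_phi[OF finC]) (use Hsq in auto)
  have PwltK: "Pwlt h 10 w \<subseteq> ?K" unfolding Pwlt_eq
  proof (rule span_least[OF Kc], rule subsetI)
    fix g assume "g \<in> {{a} | a. Plt a}"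
    then obtain a where g: "g = {a}" "Plt a" by blast
    then have "Cs e \<inter> {a} = {}" if "e \<in> E" for e using c3 that by auto
    then show "g \<in> ?K" unfolding phi_def g by auto
  qed
  have RelK: "Rel h 10 w \<subseteq> ?K"
  proof
    fix r assume "r \<in> Rel h 10 w"
    then obtain x y where r: "r = (x - y) \<union> (y - x)" and x: "x \<in> hitPpos h \<inter> Pw h 10 w"
      and y: "y \<in> Pwlt h 10 w" unfolding Rel_def by blast
    have "?phi x = {}" "?phi y = {}" using x y hitK PwltK by auto
    then show "r \<in> ?K" using r phi_sd[OF finC, of x y] by (simp add: sd_def)
  qed
  have lower: "card E \<le> card B'"
    if B': "finite B'" "B' \<subseteq> Pw h 10 w" "F2span (B' \<union> Rel h 10 w) = Pw h 10 w" for B'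
  proof -
    define T where "T = F2span (?phi ` B')"
    have Sc: "closed {p. ?phi p \<in> T}" unfolding closed_def T_def
      using phi_sd[OF finC] span_sd span_empty by auto
    have "Pw h 10 w \<subseteq> {p. ?phi p \<in> T}" unfolding B'(3)[symmetric]
    proof (rule span_least[OF Sc])
      show "B' \<union> Rel h 10 w \<subseteq> {p. ?phi p \<in> T}"
        using RelK span_empty unfolding T_def by (auto intro: span_gen)
    qed
    moreover have "Pow E \<subseteq> ?phi ` Pw h 10 w"
    proof
      fix X assume X: "X \<in> Pow E"
      then have XE: "X \<subseteq> E" by simp
      have "finite X" using finE XE finite_subset by blast
      then have "X \<in> Pw h 10 w" unfolding Pw_eq using c2 XE by (intro fin_span) auto
      moreover have "?phi X = X"
      proof -
        have "Cs e \<inter> X = (if e \<in> X then {e} else {})" if "e \<in> E" for e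
          using c3 that XE by auto
        then show ?thesis unfolding phi_def using XE by (auto split: if_splits)
      qed
      ultimately show "X \<in> ?phi ` Pw h 10 w" by (metis image_eqI)
    qed
    ultimately have PT: "Pow E \<subseteq> T" by auto
    have fT: "finite T" and cT: "card T \<le> 2 ^ card (?phi ` B')"
      using card_pow_span[of "?phi ` B'"] B'(1) unfolding T_def by auto
    have cB: "card (?phi ` B') \<le> card B'" using B'(1) by (rule card_image_le)
    have p2: "(2::nat) ^ card (?phi ` B') \<le> 2 ^ card B'" by (rule power_increasing) (use cB in auto)
    have "card (Pow E) \<le> card T" using PT fT by (rule card_mono[rotated])
    then have p1: "(2::nat) ^ card E \<le> card T" using finE by (simp add: card_Pow)
    have "(2::nat) ^ card E \<le> 2 ^ card B'" using p1 cT p2 by linarith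
    then show ?thesis by simp
  qed
  have cardE: "card E = length tab"
    using distinct_card[OF c1] unfolding E_def El_def by simp
  show ?thesis unfolding QPdim_def
  proof (rule Least_equality)
    show "\<exists>B. finite B \<and> card B = length tab \<and> B \<subseteq> Pw h 10 w \<and> F2span (B \<union> Rel h 10 w) = Pw h 10 w"
      using finB cardB cardE BPw span_eq by metis
  next
    fix d assume "\<exists>B. finite B \<and> card B = d \<and> B \<subseteq> Pw h 10 w \<and> F2span (B \<union> Rel h 10 w) = Pw h 10 w"
    then show "length tab \<le> d" using lower cardE by metis
  qed
qed
definition tabA :: "(mono \<times> mono list) list" where
  "tabA = [([1,1,1,1,2,2,2], [[1,1,1,1,1,1,4], [1,1,1,1,1,4,1], [1,1,1,1,2,2,2], [1,1,1,1,4,1,1], [2,1,1,1,1,1,3], [2,1,1,1,1,2,2], [2,1,1,1,1,3,1], [2,1,1,1,2,1,2], [2,1,1,1,2,2,1], [2,1,1,1,3,1,1], [3,2,1,1,1,1,1], [4,1,1,1,1,1,1]]),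
    ([1,1,1,2,1,2,2], [[1,1,1,1,1,1,4], [1,1,1,1,1,4,1], [1,1,1,2,1,2,2], [1,1,1,4,1,1,1], [2,1,1,1,1,1,3], [2,1,1,1,1,2,2], [2,1,1,1,1,3,1], [2,1,1,2,1,1,2], [2,1,1,2,1,2,1], [2,1,1,3,1,1,1], [3,2,1,1,1,1,1], [4,1,1,1,1,1,1]]),
    ([1,1,1,2,2,1,2], [[1,1,1,1,1,1,4], [1,1,1,1,4,1,1], [1,1,1,2,2,1,2], [1,1,1,4,1,1,1], [2,1,1,1,1,1,3], [2,1,1,1,2,1,2], [2,1,1,1,3,1,1], [2,1,1,2,1,1,2], [2,1,1,2,2,1,1], [2,1,1,3,1,1,1], [3,2,1,1,1,1,1], [4,1,1,1,1,1,1]]),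
    ([1,1,1,2,2,2,1], [[1,1,1,1,1,4,1], [1,1,1,1,4,1,1], [1,1,1,2,2,2,1], [1,1,1,4,1,1,1], [2,1,1,1,1,3,1], [2,1,1,1,2,2,1], [2,1,1,1,3,1,1], [2,1,1,2,1,2,1], [2,1,1,2,2,1,1], [2,1,1,3,1,1,1], [3,2,1,1,1,1,1], [4,1,1,1,1,1,1]]),
    ([1,1,2,1,1,2,2], [[1,1,1,1,1,1,4], [1,1,1,1,1,4,1], [1,1,2,1,1,2,2], [1,1,4,1,1,1,1], [2,1,1,1,1,1,3], [2,1,1,1,1,2,2], [2,1,1,1,1,3,1], [2,1,2,1,1,1,2], [2,1,2,1,1,2,1], [2,1,3,1,1,1,1], [3,2,1,1,1,1,1], [4,1,1,1,1,1,1]]),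
    ([1,1,2,1,2,1,2], [[1,1,1,1,1,1,4], [1,1,1,1,4,1,1], [1,1,2,1,2,1,2], [1,1,4,1,1,1,1], [2,1,1,1,1,1,3], [2,1,1,1,2,1,2], [2,1,1,1,3,1,1], [2,1,2,1,1,1,2], [2,1,2,1,2,1,1], [2,1,3,1,1,1,1], [3,2,1,1,1,1,1], [4,1,1,1,1,1,1]]),
    ([1,1,2,1,2,2,1], [[1,1,1,1,1,4,1], [1,1,1,1,4,1,1], [1,1,2,1,2,2,1], [1,1,4,1,1,1,1], [2,1,1,1,1,3,1], [2,1,1,1,2,2,1], [2,1,1,1,3,1,1], [2,1,2,1,1,2,1], [2,1,2,1,2,1,1], [2,1,3,1,1,1,1], [3,2,1,1,1,1,1], [4,1,1,1,1,1,1]]),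
    ([1,1,2,2,1,1,2], [[1,1,1,1,1,1,4], [1,1,1,4,1,1,1], [1,1,2,2,1,1,2], [1,1,4,1,1,1,1], [2,1,1,1,1,1,3], [2,1,1,2,1,1,2], [2,1,1,3,1,1,1], [2,1,2,1,1,1,2], [2,1,2,2,1,1,1], [2,1,3,1,1,1,1], [3,2,1,1,1,1,1], [4,1,1,1,1,1,1]]),
    ([1,1,2,2,1,2,1], [[1,1,1,1,1,4,1], [1,1,1,4,1,1,1], [1,1,2,2,1,2,1], [1,1,4,1,1,1,1], [2,1,1,1,1,3,1], [2,1,1,2,1,2,1], [2,1,1,3,1,1,1], [2,1,2,1,1,2,1], [2,1,2,2,1,1,1], [2,1,3,1,1,1,1], [3,2,1,1,1,1,1], [4,1,1,1,1,1,1]]),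
    ([1,1,2,2,2,1,1], [[1,1,1,1,4,1,1], [1,1,1,4,1,1,1], [1,1,2,2,2,1,1], [1,1,4,1,1,1,1], [2,1,1,1,3,1,1], [2,1,1,2,2,1,1], [2,1,1,3,1,1,1], [2,1,2,1,2,1,1], [2,1,2,2,1,1,1], [2,1,3,1,1,1,1], [3,2,1,1,1,1,1], [4,1,1,1,1,1,1]]),
    ([1,2,1,1,1,2,2], [[1,1,1,1,1,1,4], [1,1,1,1,1,4,1], [1,2,1,1,1,2,2], [1,4,1,1,1,1,1], [2,1,1,1,1,1,3], [2,1,1,1,1,2,2], [2,1,1,1,1,3,1], [2,2,1,1,1,1,2], [2,2,1,1,1,2,1], [2,3,1,1,1,1,1], [3,2,1,1,1,1,1], [4,1,1,1,1,1,1]]),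
    ([1,2,1,1,2,1,2], [[1,1,1,1,1,1,4], [1,1,1,1,4,1,1], [1,2,1,1,2,1,2], [1,4,1,1,1,1,1], [2,1,1,1,1,1,3], [2,1,1,1,2,1,2], [2,1,1,1,3,1,1], [2,2,1,1,1,1,2], [2,2,1,1,2,1,1], [2,3,1,1,1,1,1], [3,2,1,1,1,1,1], [4,1,1,1,1,1,1]]),
    ([1,2,1,1,2,2,1], [[1,1,1,1,1,4,1], [1,1,1,1,4,1,1], [1,2,1,1,2,2,1], [1,4,1,1,1,1,1], [2,1,1,1,1,3,1], [2,1,1,1,2,2,1], [2,1,1,1,3,1,1], [2,2,1,1,1,2,1], [2,2,1,1,2,1,1], [2,3,1,1,1,1,1], [3,2,1,1,1,1,1], [4,1,1,1,1,1,1]]),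
    ([1,2,1,2,1,1,2], [[1,1,1,1,1,1,4], [1,1,1,4,1,1,1], [1,2,1,2,1,1,2], [1,4,1,1,1,1,1], [2,1,1,1,1,1,3], [2,1,1,2,1,1,2], [2,1,1,3,1,1,1], [2,2,1,1,1,1,2], [2,2,1,2,1,1,1], [2,3,1,1,1,1,1], [3,2,1,1,1,1,1], [4,1,1,1,1,1,1]]),
    ([1,2,1,2,1,2,1], [[1,1,1,1,1,4,1], [1,1,1,4,1,1,1], [1,2,1,2,1,2,1], [1,4,1,1,1,1,1], [2,1,1,1,1,3,1], [2,1,1,2,1,2,1], [2,1,1,3,1,1,1], [2,2,1,1,1,2,1], [2,2,1,2,1,1,1], [2,3,1,1,1,1,1], [3,2,1,1,1,1,1], [4,1,1,1,1,1,1]]),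
    ([1,2,1,2,2,1,1], [[1,1,1,1,4,1,1], [1,1,1,4,1,1,1], [1,2,1,2,2,1,1], [1,4,1,1,1,1,1], [2,1,1,1,3,1,1], [2,1,1,2,2,1,1], [2,1,1,3,1,1,1], [2,2,1,1,2,1,1], [2,2,1,2,1,1,1], [2,3,1,1,1,1,1], [3,2,1,1,1,1,1], [4,1,1,1,1,1,1]]),
    ([1,2,2,1,1,1,2], [[1,1,1,1,1,1,4], [1,1,4,1,1,1,1], [1,2,2,1,1,1,2], [1,4,1,1,1,1,1], [2,1,1,1,1,1,3], [2,1,2,1,1,1,2], [2,1,3,1,1,1,1], [2,2,1,1,1,1,2], [2,2,2,1,1,1,1], [2,3,1,1,1,1,1], [3,2,1,1,1,1,1], [4,1,1,1,1,1,1]]),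
    ([1,2,2,1,1,2,1], [[1,1,1,1,1,4,1], [1,1,4,1,1,1,1], [1,2,2,1,1,2,1], [1,4,1,1,1,1,1], [2,1,1,1,1,3,1], [2,1,2,1,1,2,1], [2,1,3,1,1,1,1], [2,2,1,1,1,2,1], [2,2,2,1,1,1,1], [2,3,1,1,1,1,1], [3,2,1,1,1,1,1], [4,1,1,1,1,1,1]]),
    ([1,2,2,1,2,1,1], [[1,1,1,1,4,1,1], [1,1,4,1,1,1,1], [1,2,2,1,2,1,1], [1,4,1,1,1,1,1], [2,1,1,1,3,1,1], [2,1,2,1,2,1,1], [2,1,3,1,1,1,1], [2,2,1,1,2,1,1], [2,2,2,1,1,1,1], [2,3,1,1,1,1,1], [3,2,1,1,1,1,1], [4,1,1,1,1,1,1]]),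
    ([1,2,2,2,1,1,1], [[1,1,1,4,1,1,1], [1,1,4,1,1,1,1], [1,2,2,2,1,1,1], [1,4,1,1,1,1,1], [2,1,1,3,1,1,1], [2,1,2,2,1,1,1], [2,1,3,1,1,1,1], [2,2,1,2,1,1,1], [2,2,2,1,1,1,1], [2,3,1,1,1,1,1], [3,2,1,1,1,1,1], [4,1,1,1,1,1,1]])]"

definition relsA :: "(mono \<times> (nat \<times> mono) list \<times> mono list \<times> mono list) list" where
  "relsA = [([2,1,1,1,1,2,2], [(1, [1,1,1,1,1,2,2])], [], [[1,1,1,1,2,2,2], [1,1,1,2,1,2,2], [1,1,2,1,1,2,2], [1,2,1,1,1,2,2]]),
    ([2,1,1,1,2,1,2], [(1, [1,1,1,1,2,1,2])], [], [[1,1,1,1,2,2,2], [1,1,1,2,2,1,2], [1,1,2,1,2,1,2], [1,2,1,1,2,1,2]]),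
    ([2,1,1,1,2,2,1], [(1, [1,1,1,1,2,2,1])], [], [[1,1,1,1,2,2,2], [1,1,1,2,2,2,1], [1,1,2,1,2,2,1], [1,2,1,1,2,2,1]]),
    ([2,1,1,2,1,1,2], [(1, [1,1,1,2,1,1,2])], [], [[1,1,1,2,1,2,2], [1,1,1,2,2,1,2], [1,1,2,2,1,1,2], [1,2,1,2,1,1,2]]),
    ([2,1,1,2,1,2,1], [(1, [1,1,1,2,1,2,1])], [], [[1,1,1,2,1,2,2], [1,1,1,2,2,2,1], [1,1,2,2,1,2,1], [1,2,1,2,1,2,1]]),
    ([2,1,1,2,2,1,1], [(1, [1,1,1,2,2,1,1])], [], [[1,1,1,2,2,1,2], [1,1,1,2,2,2,1], [1,1,2,2,2,1,1], [1,2,1,2,2,1,1]]),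
    ([2,1,2,1,1,1,2], [(1, [1,1,2,1,1,1,2])], [], [[1,1,2,1,1,2,2], [1,1,2,1,2,1,2], [1,1,2,2,1,1,2], [1,2,2,1,1,1,2]]),
    ([2,1,2,1,1,2,1], [(1, [1,1,2,1,1,2,1])], [], [[1,1,2,1,1,2,2], [1,1,2,1,2,2,1], [1,1,2,2,1,2,1], [1,2,2,1,1,2,1]]),
    ([2,1,2,1,2,1,1], [(1, [1,1,2,1,2,1,1])], [], [[1,1,2,1,2,1,2], [1,1,2,1,2,2,1], [1,1,2,2,2,1,1], [1,2,2,1,2,1,1]]),
    ([2,1,2,2,1,1,1], [(1, [1,1,2,2,1,1,1])], [], [[1,1,2,2,1,1,2], [1,1,2,2,1,2,1], [1,1,2,2,2,1,1], [1,2,2,2,1,1,1]]),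
    ([2,2,1,1,1,1,2], [(1, [1,2,1,1,1,1,2])], [], [[1,2,1,1,1,2,2], [1,2,1,1,2,1,2], [1,2,1,2,1,1,2], [1,2,2,1,1,1,2]]),
    ([2,2,1,1,1,2,1], [(1, [1,2,1,1,1,2,1])], [], [[1,2,1,1,1,2,2], [1,2,1,1,2,2,1], [1,2,1,2,1,2,1], [1,2,2,1,1,2,1]]),
    ([2,2,1,1,2,1,1], [(1, [1,2,1,1,2,1,1])], [], [[1,2,1,1,2,1,2], [1,2,1,1,2,2,1], [1,2,1,2,2,1,1], [1,2,2,1,2,1,1]]),
    ([2,2,1,2,1,1,1], [(1, [1,2,1,2,1,1,1])], [], [[1,2,1,2,1,1,2], [1,2,1,2,1,2,1], [1,2,1,2,2,1,1], [1,2,2,2,1,1,1]]),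
    ([2,2,2,1,1,1,1], [(3, [1,1,1,1,1,1,1]), (1, [1,1,1,1,1,2,2]), (1, [1,1,1,1,2,1,2]), (1, [1,1,1,1,2,2,1]), (1, [1,1,1,2,1,1,2]), (1, [1,1,1,2,1,2,1]), (1, [1,1,1,2,2,1,1]), (1, [1,1,2,1,1,1,2]), (1, [1,1,2,1,1,2,1]), (1, [1,1,2,1,2,1,1]), (1, [1,1,2,2,1,1,1]), (1, [1,2,1,1,1,1,2]), (1, [1,2,1,1,1,2,1]), (1, [1,2,1,1,2,1,1]), (1, [1,2,1,2,1,1,1])], [], [[1,2,2,1,1,1,2], [1,2,2,1,1,2,1], [1,2,2,1,2,1,1], [1,2,2,2,1,1,1]])]"

definition tabB :: "(mono \<times> mono list) list" where
  "tabB = [([1,1,1,1,1,2,3], [[1,1,1,1,1,2,3], [2,1,1,1,1,1,3]]),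
    ([1,1,1,1,1,3,2], [[1,1,1,1,1,3,2], [2,1,1,1,1,3,1]]),
    ([1,1,1,1,2,1,3], [[1,1,1,1,2,1,3], [2,1,1,1,1,1,3]]),
    ([1,1,1,1,2,3,1], [[1,1,1,1,2,3,1], [2,1,1,1,1,3,1]]),
    ([1,1,1,1,3,1,2], [[1,1,1,1,3,1,2], [2,1,1,1,3,1,1]]),
    ([1,1,1,1,3,2,1], [[1,1,1,1,3,2,1], [2,1,1,1,3,1,1]]),
    ([1,1,1,2,1,1,3], [[1,1,1,2,1,1,3], [2,1,1,1,1,1,3]]),
    ([1,1,1,2,1,3,1], [[1,1,1,2,1,3,1], [2,1,1,1,1,3,1]]),
    ([1,1,1,2,3,1,1], [[1,1,1,2,3,1,1], [2,1,1,1,3,1,1]]),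
    ([1,1,1,3,1,1,2], [[1,1,1,3,1,1,2], [2,1,1,3,1,1,1]]),
    ([1,1,1,3,1,2,1], [[1,1,1,3,1,2,1], [2,1,1,3,1,1,1]]),
    ([1,1,1,3,2,1,1], [[1,1,1,3,2,1,1], [2,1,1,3,1,1,1]]),
    ([1,1,2,1,1,1,3], [[1,1,2,1,1,1,3], [2,1,1,1,1,1,3]]),
    ([1,1,2,1,1,3,1], [[1,1,2,1,1,3,1], [2,1,1,1,1,3,1]]),
    ([1,1,2,1,3,1,1], [[1,1,2,1,3,1,1], [2,1,1,1,3,1,1]]),
    ([1,1,2,3,1,1,1], [[1,1,2,3,1,1,1], [2,1,1,3,1,1,1]]),
    ([1,1,3,1,1,1,2], [[1,1,3,1,1,1,2], [2,1,3,1,1,1,1]]),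
    ([1,1,3,1,1,2,1], [[1,1,3,1,1,2,1], [2,1,3,1,1,1,1]]),
    ([1,1,3,1,2,1,1], [[1,1,3,1,2,1,1], [2,1,3,1,1,1,1]]),
    ([1,1,3,2,1,1,1], [[1,1,3,2,1,1,1], [2,1,3,1,1,1,1]]),
    ([1,2,1,1,1,1,3], [[1,2,1,1,1,1,3], [2,1,1,1,1,1,3]]),
    ([1,2,1,1,1,3,1], [[1,2,1,1,1,3,1], [2,1,1,1,1,3,1]]),
    ([1,2,1,1,3,1,1], [[1,2,1,1,3,1,1], [2,1,1,1,3,1,1]]),
    ([1,2,1,3,1,1,1], [[1,2,1,3,1,1,1], [2,1,1,3,1,1,1]]),
    ([1,2,3,1,1,1,1], [[1,2,3,1,1,1,1], [2,1,3,1,1,1,1]]),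
    ([1,3,1,1,1,1,2], [[1,3,1,1,1,1,2], [2,3,1,1,1,1,1]]),
    ([1,3,1,1,1,2,1], [[1,3,1,1,1,2,1], [2,3,1,1,1,1,1]]),
    ([1,3,1,1,2,1,1], [[1,3,1,1,2,1,1], [2,3,1,1,1,1,1]]),
    ([1,3,1,2,1,1,1], [[1,3,1,2,1,1,1], [2,3,1,1,1,1,1]]),
    ([1,3,2,1,1,1,1], [[1,3,2,1,1,1,1], [2,3,1,1,1,1,1]]),
    ([3,1,1,1,1,1,2], [[3,1,1,1,1,1,2], [3,2,1,1,1,1,1]]),
    ([3,1,1,1,1,2,1], [[3,1,1,1,1,2,1], [3,2,1,1,1,1,1]]),
    ([3,1,1,1,2,1,1], [[3,1,1,1,2,1,1], [3,2,1,1,1,1,1]]),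
    ([3,1,1,2,1,1,1], [[3,1,1,2,1,1,1], [3,2,1,1,1,1,1]]),
    ([3,1,2,1,1,1,1], [[3,1,2,1,1,1,1], [3,2,1,1,1,1,1]])]"

definition relsB :: "(mono \<times> (nat \<times> mono) list \<times> mono list \<times> mono list) list" where
  "relsB = [([2,1,1,1,1,1,3], [(1, [1,1,1,1,1,1,3])], [[1,1,1,1,1,1,4]], [[1,1,1,1,1,2,3], [1,1,1,1,2,1,3], [1,1,1,2,1,1,3], [1,1,2,1,1,1,3], [1,2,1,1,1,1,3]]),
    ([2,1,1,1,1,3,1], [(1, [1,1,1,1,1,3,1])], [[1,1,1,1,1,4,1]], [[1,1,1,1,1,3,2], [1,1,1,1,2,3,1], [1,1,1,2,1,3,1], [1,1,2,1,1,3,1], [1,2,1,1,1,3,1]]),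
    ([2,1,1,1,3,1,1], [(1, [1,1,1,1,3,1,1])], [[1,1,1,1,4,1,1]], [[1,1,1,1,3,1,2], [1,1,1,1,3,2,1], [1,1,1,2,3,1,1], [1,1,2,1,3,1,1], [1,2,1,1,3,1,1]]),
    ([2,1,1,3,1,1,1], [(1, [1,1,1,3,1,1,1])], [[1,1,1,4,1,1,1]], [[1,1,1,3,1,1,2], [1,1,1,3,1,2,1], [1,1,1,3,2,1,1], [1,1,2,3,1,1,1], [1,2,1,3,1,1,1]]),
    ([2,1,3,1,1,1,1], [(3, [1,1,1,1,1,1,1]), (2, [1,1,1,1,1,1,2]), (2, [1,1,1,1,1,2,1]), (1, [1,1,1,1,1,2,2]), (2, [1,1,1,1,2,1,1]), (1, [1,1,1,1,2,1,2]), (1, [1,1,1,1,2,2,1]), (2, [1,1,1,2,1,1,1]), (1, [1,1,1,2,1,1,2]), (1, [1,1,1,2,1,2,1]), (1, [1,1,1,2,2,1,1]), (2, [1,1,2,1,1,1,1]), (1, [1,1,2,1,1,1,2]), (1, [1,1,2,1,1,2,1]), (1, [1,1,2,1,2,1,1]), (1, [1,1,2,2,1,1,1]), (1, [1,1,3,1,1,1,1])], [[1,1,1,1,1,1,4], [1,1,1,1,1,4,1], [1,1,1,1,2,2,2], [1,1,1,1,4,1,1], [1,1,1,2,1,2,2], [1,1,1,2,2,1,2], [1,1,1,2,2,2,1], [1,1,1,4,1,1,1], [1,1,2,1,1,2,2], [1,1,2,1,2,1,2], [1,1,2,1,2,2,1], [1,1,2,2,1,1,2], [1,1,2,2,1,2,1],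 [1,1,2,2,2,1,1]], [[1,1,3,1,1,1,2], [1,1,3,1,1,2,1], [1,1,3,1,2,1,1], [1,1,3,2,1,1,1], [1,2,3,1,1,1,1]]),
    ([2,3,1,1,1,1,1], [(3, [1,1,1,1,1,1,1]), (2, [1,1,1,1,1,1,2]), (2, [1,1,1,1,1,2,1]), (1, [1,1,1,1,1,2,2]), (2, [1,1,1,1,2,1,1]), (1, [1,1,1,1,2,1,2]), (1, [1,1,1,1,2,2,1]), (2, [1,1,1,2,1,1,1]), (1, [1,1,1,2,1,1,2]), (1, [1,1,1,2,1,2,1]), (1, [1,1,1,2,2,1,1]), (2, [1,2,1,1,1,1,1]), (1, [1,2,1,1,1,1,2]), (1, [1,2,1,1,1,2,1]), (1, [1,2,1,1,2,1,1]), (1, [1,2,1,2,1,1,1]), (1, [1,3,1,1,1,1,1])], [[1,1,1,1,1,1,4], [1,1,1,1,1,4,1], [1,1,1,1,2,2,2], [1,1,1,1,4,1,1], [1,1,1,2,1,2,2], [1,1,1,2,2,1,2], [1,1,1,2,2,2,1], [1,1,1,4,1,1,1], [1,2,1,1,1,2,2], [1,2,1,1,2,1,2], [1,2,1,1,2,2,1], [1,2,1,2,1,1,2], [1,2,1,2,1,2,1], [1,2,1,2,2,1,1]], [[1,3,1,1,1,1,2], [1,3,1,1,1,2,1], [1,3,1,1,2,1,1], [1,3,1,2,1,1,1], [1,3,2,1,1,1,1]]),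
    ([3,2,1,1,1,1,1], [(3, [1,1,1,1,1,1,1]), (2, [1,1,1,1,1,1,2]), (2, [1,1,1,1,1,2,1]), (2, [1,1,1,1,2,1,1]), (2, [1,1,1,2,1,1,1]), (1, [1,1,2,1,1,1,2]), (1, [1,1,2,1,1,2,1]), (1, [1,1,2,1,2,1,1]), (1, [1,1,2,2,1,1,1]), (1, [1,2,1,1,1,1,2]), (1, [1,2,1,1,1,2,1]), (1, [1,2,1,1,2,1,1]), (1, [1,2,1,2,1,1,1]), (2, [2,1,1,1,1,1,1]), (1, [3,1,1,1,1,1,1])], [[1,1,1,1,1,1,4], [1,1,1,1,1,4,1], [1,1,1,1,4,1,1], [1,1,1,4,1,1,1], [1,1,2,1,1,2,2], [1,1,2,1,2,1,2], [1,1,2,1,2,2,1], [1,1,2,2,1,1,2], [1,1,2,2,1,2,1], [1,1,2,2,2,1,1], [1,2,1,1,1,2,2], [1,2,1,1,2,1,2], [1,2,1,1,2,2,1], [1,2,1,2,1,1,2], [1,2,1,2,1,2,1], [1,2,1,2,2,1,1]], [[3,1,1,1,1,1,2], [3,1,1,1,1,2,1], [3,1,1,1,2,1,1], [3,1,1,2,1,1,1], [3,1,2,1,1,1,1]])]"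

definition tabC :: "(mono \<times> mono list) list" where
  "tabC = [([1,1,1,1,1,1,2,2], [[1,1,1,1,1,1,2,2], [1,2,2,1,1,1,1,1], [2,1,1,1,1,1,1,2], [2,1,1,1,1,1,2,1], [2,1,2,1,1,1,1,1], [2,2,1,1,1,1,1,1]]),
    ([1,1,1,1,1,2,1,2], [[1,1,1,1,1,2,1,2], [1,2,2,1,1,1,1,1], [2,1,1,1,1,1,1,2], [2,1,1,1,1,2,1,1], [2,1,2,1,1,1,1,1], [2,2,1,1,1,1,1,1]]),
    ([1,1,1,1,1,2,2,1], [[1,1,1,1,1,2,2,1], [1,2,2,1,1,1,1,1], [2,1,1,1,1,1,2,1], [2,1,1,1,1,2,1,1], [2,1,2,1,1,1,1,1], [2,2,1,1,1,1,1,1]]),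
    ([1,1,1,1,2,1,1,2], [[1,1,1,1,2,1,1,2], [1,2,2,1,1,1,1,1], [2,1,1,1,1,1,1,2], [2,1,1,1,2,1,1,1], [2,1,2,1,1,1,1,1], [2,2,1,1,1,1,1,1]]),
    ([1,1,1,1,2,1,2,1], [[1,1,1,1,2,1,2,1], [1,2,2,1,1,1,1,1], [2,1,1,1,1,1,2,1], [2,1,1,1,2,1,1,1], [2,1,2,1,1,1,1,1], [2,2,1,1,1,1,1,1]]),
    ([1,1,1,1,2,2,1,1], [[1,1,1,1,2,2,1,1], [1,2,2,1,1,1,1,1], [2,1,1,1,1,2,1,1], [2,1,1,1,2,1,1,1], [2,1,2,1,1,1,1,1], [2,2,1,1,1,1,1,1]]),
    ([1,1,1,2,1,1,1,2], [[1,1,1,2,1,1,1,2], [1,2,2,1,1,1,1,1], [2,1,1,1,1,1,1,2], [2,1,1,2,1,1,1,1], [2,1,2,1,1,1,1,1], [2,2,1,1,1,1,1,1]]),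
    ([1,1,1,2,1,1,2,1], [[1,1,1,2,1,1,2,1], [1,2,2,1,1,1,1,1], [2,1,1,1,1,1,2,1], [2,1,1,2,1,1,1,1], [2,1,2,1,1,1,1,1], [2,2,1,1,1,1,1,1]]),
    ([1,1,1,2,1,2,1,1], [[1,1,1,2,1,2,1,1], [1,2,2,1,1,1,1,1], [2,1,1,1,1,2,1,1], [2,1,1,2,1,1,1,1], [2,1,2,1,1,1,1,1], [2,2,1,1,1,1,1,1]]),
    ([1,1,1,2,2,1,1,1], [[1,1,1,2,2,1,1,1], [1,2,2,1,1,1,1,1], [2,1,1,1,2,1,1,1], [2,1,1,2,1,1,1,1], [2,1,2,1,1,1,1,1], [2,2,1,1,1,1,1,1]]),
    ([1,1,2,1,1,1,1,2], [[1,1,2,1,1,1,1,2], [1,2,2,1,1,1,1,1], [2,1,1,1,1,1,1,2], [2,2,1,1,1,1,1,1]]),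
    ([1,1,2,1,1,1,2,1], [[1,1,2,1,1,1,2,1], [1,2,2,1,1,1,1,1], [2,1,1,1,1,1,2,1], [2,2,1,1,1,1,1,1]]),
    ([1,1,2,1,1,2,1,1], [[1,1,2,1,1,2,1,1], [1,2,2,1,1,1,1,1], [2,1,1,1,1,2,1,1], [2,2,1,1,1,1,1,1]]),
    ([1,1,2,1,2,1,1,1], [[1,1,2,1,2,1,1,1], [1,2,2,1,1,1,1,1], [2,1,1,1,2,1,1,1], [2,2,1,1,1,1,1,1]]),
    ([1,1,2,2,1,1,1,1], [[1,1,2,2,1,1,1,1], [1,2,2,1,1,1,1,1], [2,1,1,2,1,1,1,1], [2,2,1,1,1,1,1,1]]),
    ([1,2,1,1,1,1,1,2], [[1,2,1,1,1,1,1,2], [1,2,2,1,1,1,1,1], [2,1,1,1,1,1,1,2], [2,1,2,1,1,1,1,1]]),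
    ([1,2,1,1,1,1,2,1], [[1,2,1,1,1,1,2,1], [1,2,2,1,1,1,1,1], [2,1,1,1,1,1,2,1], [2,1,2,1,1,1,1,1]]),
    ([1,2,1,1,1,2,1,1], [[1,2,1,1,1,2,1,1], [1,2,2,1,1,1,1,1], [2,1,1,1,1,2,1,1], [2,1,2,1,1,1,1,1]]),
    ([1,2,1,1,2,1,1,1], [[1,2,1,1,2,1,1,1], [1,2,2,1,1,1,1,1], [2,1,1,1,2,1,1,1], [2,1,2,1,1,1,1,1]]),
    ([1,2,1,2,1,1,1,1], [[1,2,1,2,1,1,1,1], [1,2,2,1,1,1,1,1], [2,1,1,2,1,1,1,1], [2,1,2,1,1,1,1,1]])]"

definition relsC :: "(mono \<times> (nat \<times> mono) list \<times> mono list \<times> mono list) list" where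
  "relsC = [([1,2,2,1,1,1,1,1], [(2, [1,1,1,1,1,1,1,1]), (1, [1,1,1,1,1,1,1,2]), (1, [1,1,1,1,1,1,2,1]), (1, [1,1,1,1,1,2,1,1]), (1, [1,1,1,1,2,1,1,1]), (1, [1,1,1,2,1,1,1,1]), (1, [1,1,2,1,1,1,1,1]), (1, [1,2,1,1,1,1,1,1])], [], [[1,1,1,1,1,1,2,2], [1,1,1,1,1,2,1,2], [1,1,1,1,1,2,2,1], [1,1,1,1,2,1,1,2], [1,1,1,1,2,1,2,1], [1,1,1,1,2,2,1,1], [1,1,1,2,1,1,1,2], [1,1,1,2,1,1,2,1], [1,1,1,2,1,2,1,1], [1,1,1,2,2,1,1,1], [1,1,2,1,1,1,1,2], [1,1,2,1,1,1,2,1], [1,1,2,1,1,2,1,1], [1,1,2,1,2,1,1,1], [1,1,2,2,1,1,1,1], [1,2,1,1,1,1,1,2], [1,2,1,1,1,1,2,1], [1,2,1,1,1,2,1,1], [1,2,1,1,2,1,1,1], [1,2,1,2,1,1,1,1]]),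
    ([2,1,1,1,1,1,1,2], [(1, [1,1,1,1,1,1,1,2])], [], [[1,1,1,1,1,1,2,2], [1,1,1,1,1,2,1,2], [1,1,1,1,2,1,1,2], [1,1,1,2,1,1,1,2], [1,1,2,1,1,1,1,2], [1,2,1,1,1,1,1,2]]),
    ([2,1,1,1,1,1,2,1], [(1, [1,1,1,1,1,1,2,1])], [], [[1,1,1,1,1,1,2,2], [1,1,1,1,1,2,2,1], [1,1,1,1,2,1,2,1], [1,1,1,2,1,1,2,1], [1,1,2,1,1,1,2,1], [1,2,1,1,1,1,2,1]]),
    ([2,1,1,1,1,2,1,1], [(1, [1,1,1,1,1,2,1,1])], [], [[1,1,1,1,1,2,1,2], [1,1,1,1,1,2,2,1], [1,1,1,1,2,2,1,1], [1,1,1,2,1,2,1,1], [1,1,2,1,1,2,1,1], [1,2,1,1,1,2,1,1]]),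
    ([2,1,1,1,2,1,1,1], [(1, [1,1,1,1,2,1,1,1])], [], [[1,1,1,1,2,1,1,2], [1,1,1,1,2,1,2,1], [1,1,1,1,2,2,1,1], [1,1,1,2,2,1,1,1], [1,1,2,1,2,1,1,1], [1,2,1,1,2,1,1,1]]),
    ([2,1,1,2,1,1,1,1], [(1, [1,1,1,2,1,1,1,1])], [], [[1,1,1,2,1,1,1,2], [1,1,1,2,1,1,2,1], [1,1,1,2,1,2,1,1], [1,1,1,2,2,1,1,1], [1,1,2,2,1,1,1,1], [1,2,1,2,1,1,1,1]]),
    ([2,1,2,1,1,1,1,1], [(2, [1,1,1,1,1,1,1,1]), (1, [1,1,1,1,1,1,1,2]), (1, [1,1,1,1,1,1,2,1]), (1, [1,1,1,1,1,2,1,1]), (1, [1,1,1,1,2,1,1,1]), (1, [1,1,1,2,1,1,1,1]), (1, [1,2,1,1,1,1,1,1])], [], [[1,1,1,1,1,1,2,2], [1,1,1,1,1,2,1,2], [1,1,1,1,1,2,2,1], [1,1,1,1,2,1,1,2], [1,1,1,1,2,1,2,1], [1,1,1,1,2,2,1,1], [1,1,1,2,1,1,1,2], [1,1,1,2,1,1,2,1], [1,1,1,2,1,2,1,1], [1,1,1,2,2,1,1,1], [1,2,1,1,1,1,1,2], [1,2,1,1,1,1,2,1], [1,2,1,1,1,2,1,1], [1,2,1,1,2,1,1,1], [1,2,1,2,1,1,1,1]]),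
    ([2,2,1,1,1,1,1,1], [(2, [1,1,1,1,1,1,1,1]), (1, [1,1,1,1,1,1,1,2]), (1, [1,1,1,1,1,1,2,1]), (1, [1,1,1,1,1,2,1,1]), (1, [1,1,1,1,2,1,1,1]), (1, [1,1,1,2,1,1,1,1]), (1, [1,1,2,1,1,1,1,1])], [], [[1,1,1,1,1,1,2,2], [1,1,1,1,1,2,1,2], [1,1,1,1,1,2,2,1], [1,1,1,1,2,1,1,2], [1,1,1,1,2,1,2,1], [1,1,1,1,2,2,1,1], [1,1,1,2,1,1,1,2], [1,1,1,2,1,1,2,1], [1,1,1,2,1,2,1,1], [1,1,1,2,2,1,1,1], [1,1,2,1,1,1,1,2], [1,1,2,1,1,1,2,1], [1,1,2,1,1,2,1,1], [1,1,2,1,2,1,1,1], [1,1,2,2,1,1,1,1]])]"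

definition GA :: "mono list" where
  "GA = [[1,1,1,1,2,2,2], [1,1,1,2,1,2,2], [1,1,1,2,2,1,2], [1,1,1,2,2,2,1], [1,1,2,1,1,2,2], [1,1,2,1,2,1,2], [1,1,2,1,2,2,1], [1,1,2,2,1,1,2], [1,1,2,2,1,2,1], [1,1,2,2,2,1,1], [1,2,1,1,1,2,2], [1,2,1,1,2,1,2], [1,2,1,1,2,2,1], [1,2,1,2,1,1,2], [1,2,1,2,1,2,1], [1,2,1,2,2,1,1], [1,2,2,1,1,1,2], [1,2,2,1,1,2,1], [1,2,2,1,2,1,1], [1,2,2,2,1,1,1], [2,1,1,1,1,2,2], [2,1,1,1,2,1,2], [2,1,1,1,2,2,1], [2,1,1,2,1,1,2], [2,1,1,2,1,2,1], [2,1,1,2,2,1,1], [2,1,2,1,1,1,2], [2,1,2,1,1,2,1], [2,1,2,1,2,1,1], [2,1,2,2,1,1,1], [2,2,1,1,1,1,2], [2,2,1,1,1,2,1], [2,2,1,1,2,1,1], [2,2,1,2,1,1,1], [2,2,2,1,1,1,1]]"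

definition GltA :: "mono list" where
  "GltA = []"

definition GB :: "mono list" where
  "GB = [[1,1,1,1,1,1,4], [1,1,1,1,1,2,3], [1,1,1,1,1,3,2], [1,1,1,1,1,4,1], [1,1,1,1,2,1,3], [1,1,1,1,2,2,2], [1,1,1,1,2,3,1], [1,1,1,1,3,1,2], [1,1,1,1,3,2,1], [1,1,1,1,4,1,1], [1,1,1,2,1,1,3], [1,1,1,2,1,2,2], [1,1,1,2,1,3,1], [1,1,1,2,2,1,2], [1,1,1,2,2,2,1], [1,1,1,2,3,1,1], [1,1,1,3,1,1,2], [1,1,1,3,1,2,1], [1,1,1,3,2,1,1], [1,1,1,4,1,1,1], [1,1,2,1,1,1,3], [1,1,2,1,1,2,2], [1,1,2,1,1,3,1], [1,1,2,1,2,1,2], [1,1,2,1,2,2,1], [1,1,2,1,3,1,1], [1,1,2,2,1,1,2], [1,1,2,2,1,2,1], [1,1,2,2,2,1,1], [1,1,2,3,1,1,1], [1,1,3,1,1,1,2], [1,1,3,1,1,2,1], [1,1,3,1,2,1,1], [1,1,3,2,1,1,1], [1,1,4,1,1,1,1], [1,2,1,1,1,1,3], [1,2,1,1,1,2,2], [1,2,1,1,1,3,1], [1,2,1,1,2,1,2], [1,2,1,1,2,2,1], [1,2,1,1,3,1,1], [1,2,1,2,1,1,2], [1,2,1,2,1,2,1], [1,2,1,2,2,1,1], [1,2,1,3,1,1,1], [1,2,2,1,1,1,2], [1,2,2,1,1,2,1], [1,2,2,1,2,1,1], [1,2,2,2,1,1,1], [1,2,3,1,1,1,1], [1,3,1,1,1,1,2],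 [1,3,1,1,1,2,1], [1,3,1,1,2,1,1], [1,3,1,2,1,1,1], [1,3,2,1,1,1,1], [1,4,1,1,1,1,1], [2,1,1,1,1,1,3], [2,1,1,1,1,2,2], [2,1,1,1,1,3,1], [2,1,1,1,2,1,2], [2,1,1,1,2,2,1], [2,1,1,1,3,1,1], [2,1,1,2,1,1,2], [2,1,1,2,1,2,1], [2,1,1,2,2,1,1], [2,1,1,3,1,1,1], [2,1,2,1,1,1,2], [2,1,2,1,1,2,1], [2,1,2,1,2,1,1], [2,1,2,2,1,1,1], [2,1,3,1,1,1,1], [2,2,1,1,1,1,2], [2,2,1,1,1,2,1], [2,2,1,1,2,1,1], [2,2,1,2,1,1,1], [2,2,2,1,1,1,1], [2,3,1,1,1,1,1], [3,1,1,1,1,1,2], [3,1,1,1,1,2,1], [3,1,1,1,2,1,1], [3,1,1,2,1,1,1], [3,1,2,1,1,1,1], [3,2,1,1,1,1,1], [4,1,1,1,1,1,1]]"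

definition GltB :: "mono list" where
  "GltB = [[1,1,1,1,1,1,4], [1,1,1,1,1,4,1], [1,1,1,1,2,2,2], [1,1,1,1,4,1,1], [1,1,1,2,1,2,2], [1,1,1,2,2,1,2], [1,1,1,2,2,2,1], [1,1,1,4,1,1,1], [1,1,2,1,1,2,2], [1,1,2,1,2,1,2], [1,1,2,1,2,2,1], [1,1,2,2,1,1,2], [1,1,2,2,1,2,1], [1,1,2,2,2,1,1], [1,1,4,1,1,1,1], [1,2,1,1,1,2,2], [1,2,1,1,2,1,2], [1,2,1,1,2,2,1], [1,2,1,2,1,1,2], [1,2,1,2,1,2,1], [1,2,1,2,2,1,1], [1,2,2,1,1,1,2], [1,2,2,1,1,2,1], [1,2,2,1,2,1,1], [1,2,2,2,1,1,1], [1,4,1,1,1,1,1], [2,1,1,1,1,2,2], [2,1,1,1,2,1,2], [2,1,1,1,2,2,1], [2,1,1,2,1,1,2], [2,1,1,2,1,2,1], [2,1,1,2,2,1,1], [2,1,2,1,1,1,2], [2,1,2,1,1,2,1], [2,1,2,1,2,1,1], [2,1,2,2,1,1,1], [2,2,1,1,1,1,2], [2,2,1,1,1,2,1], [2,2,1,1,2,1,1], [2,2,1,2,1,1,1], [2,2,2,1,1,1,1], [4,1,1,1,1,1,1]]"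

definition GC :: "mono list" where
  "GC = [[1,1,1,1,1,1,2,2], [1,1,1,1,1,2,1,2], [1,1,1,1,1,2,2,1], [1,1,1,1,2,1,1,2], [1,1,1,1,2,1,2,1], [1,1,1,1,2,2,1,1], [1,1,1,2,1,1,1,2], [1,1,1,2,1,1,2,1], [1,1,1,2,1,2,1,1], [1,1,1,2,2,1,1,1], [1,1,2,1,1,1,1,2], [1,1,2,1,1,1,2,1], [1,1,2,1,1,2,1,1], [1,1,2,1,2,1,1,1], [1,1,2,2,1,1,1,1], [1,2,1,1,1,1,1,2], [1,2,1,1,1,1,2,1], [1,2,1,1,1,2,1,1], [1,2,1,1,2,1,1,1], [1,2,1,2,1,1,1,1], [1,2,2,1,1,1,1,1], [2,1,1,1,1,1,1,2], [2,1,1,1,1,1,2,1], [2,1,1,1,1,2,1,1], [2,1,1,1,2,1,1,1], [2,1,1,2,1,1,1,1], [2,1,2,1,1,1,1,1], [2,2,1,1,1,1,1,1]]"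

definition GltC :: "mono list" where
  "GltC = []"

lemma Gl_zero:
  assumes "length w \<le> 4" "Gl h w = []"
  shows "QPdim h 10 w = 0"
proof (rule QPdim_zero, intro allI notI)
  fix a assume "a \<in> posmono h \<and> sum_list a = 10 \<and> wle (weight a) (wvec w)"
  then have "a \<in> set (Gl h w)" using Gl_iff[OF assms(1), of a h] by simp
  then show False using assms(2) by simp
qed

lemma weight0_bound: "\<forall>x\<in>set a. 0 < x \<Longrightarrow> 2 * length a \<le> sum_list a + weight a 0"
proof (induction a)
  case Nil then show ?case by (simp add: weight_def)
next
  case (Cons x xs)
  have "0 < x" using Cons.prems by simp
  then have "2 \<le> x + x mod 2" by (cases "x = 1") auto
  moreover have "weight (x # xs) 0 = x mod 2 + weight xs 0" by (simp add: weight_def)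
  ultimately show ?case using Cons by simp
qed

lemma not_wle0:
  assumes "v 0 < u 0"
  shows "\<not> wle u v"
proof
  assume "wle u v"
  then consider "u = v" | k where "\<forall>i<k. u i = v i" "u k < v k" unfolding wle_def wless_def by blast
  then show False
  proof cases
    case 1 then show False using assms by simp
  next
    case 2
    show False
    proof (cases "k = 0")
      case True then show False using 2 assms by simp
    next
      case False then show False using 2 assms by (metis less_irrefl neq0_conv)
    qed
  qed
qed

lemma big_h:
  assumes "9 \<le> h" "wvec w 0 \<le> 6"
  shows "QPdim h 10 w = 0"
proof (rule QPdim_zero, intro allI notI)
  fix a assume a: "a \<in> posmono h \<and> sum_list a = 10 \<and> wle (weight a) (wvec w)"
  then have "2 * h \<le> 10 + weight a 0" using weight0_bound[of a] by (auto simp: posmono_def)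
  then have "wvec w 0 < weight a 0" using assms by linarith
  then show False using a not_wle0 by blast
qed

lemma resA: "QPdim 7 10 [4,3] = 20"
proof -
  have "chk 7 [4,3] GA GltA tabA relsA" by code_simp
  then have "QPdim 7 10 [4,3] = length tabA" by (rule QPdim_chk) simp
  then show ?thesis by (simp add: tabA_def)
qed

lemma resB: "QPdim 7 10 [6,2] = 35"
proof -
  have "chk 7 [6,2] GB GltB tabB relsB" by code_simp
  then have "QPdim 7 10 [6,2] = length tabB" by (rule QPdim_chk) simp
  then show ?thesis by (simp add: tabB_def)
qed

lemma resC: "QPdim 8 10 [6,2] = 20"
proof -
  have "chk 8 [6,2] GC GltC tabC relsC" by code_simp
  then have "QPdim 8 10 [6,2] = length tabC" by (rule QPdim_chk) simp
  then show ?thesis by (simp add: tabC_def)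
qed

lemma z1: "QPdim 7 10 [2,2,1] = 0" by (rule Gl_zero) (simp, code_simp)
lemma z2: "QPdim 7 10 [2,4] = 0" by (rule Gl_zero) (simp, code_simp)
lemma z3: "QPdim 7 10 [4,1,1] = 0" by (rule Gl_zero) (simp, code_simp)
lemma z4: "QPdim 8 10 [2,2,1] = 0" by (rule Gl_zero) (simp, code_simp)
lemma z5: "QPdim 8 10 [2,4] = 0" by (rule Gl_zero) (simp, code_simp)
lemma z6: "QPdim 8 10 [4,1,1] = 0" by (rule Gl_zero) (simp, code_simp)
lemma z7: "QPdim 8 10 [4,3] = 0" by (rule Gl_zero) (simp, code_simp)

theorem mainTheorem8:
  shows "QPdim 7 10 [2,2,1] = 0 \<and> QPdim 7 10 [2,4] = 0 \<and> QPdim 7 10 [4,1,1] = 0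
       \<and> QPdim 7 10 [4,3] = 20 \<and> QPdim 7 10 [6,2] = 35
       \<and> QPdim 8 10 [2,2,1] = 0 \<and> QPdim 8 10 [2,4] = 0 \<and> QPdim 8 10 [4,1,1] = 0
       \<and> QPdim 8 10 [4,3] = 0 \<and> QPdim 8 10 [6,2] = 20
       \<and> (\<forall>h\<ge>9. QPdim h 10 [2,2,1] = 0 \<and> QPdim h 10 [2,4] = 0 \<and> QPdim h 10 [4,1,1] = 0
                 \<and> QPdim h 10 [4,3] = 0 \<and> QPdim h 10 [6,2] = 0)"
  using z1 z2 z3 z4 z5 z6 z7 resA resB resC big_h by (simp add: wvec_def)

end
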